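(* For each $\mu\in[\mu_m,\mu_M]$, the map $x\mapsto V^N(x,N,\mu)$ is positive, increasing and convex on $(0,\infty)$. Moreover, there is $L>0$ independent of $\mu$ such that $|V^N(x,N,\mu)-V^N(y,N,\mu)|\le L|x-y|$ for all $x,y\in(0,\infty)$.
   Context: Let $(B_t)_{t\ge0}$ be a standard Brownian motion, $\mathbb F^B$ its augmented filtration and $\mathcal T(\mathbb F^B)$ the set of $\mathbb F^B$-stopping times with values in $[0,\infty]$ (terms discounted at $\tau$ are $0$ on $\{\tau=\infty\}$). Fix $\theta>0$, $\alpha\ge0$, $\sigma>0$, $\rho>0$, $\nu\in[0,1]$, $K\in\mathbb R$, $\hat\rho>0$, $0<\mu_m\le\mu_M<\infty$, $\hat\mu\in[\mu_m,\mu_M]$, and assume $\theta-\alpha-\rho-\mu_m<0$. For $x>0$, $X_t=x\exp((\theta-\alpha-\sigma^2/2)t+\sigma B_t)$ solves $dX_t=(\theta-\alpha)X_tdt+\sigma X_tdB_t$, $X_0=x$, and $\mathsf E_x$ is the corresponding expectation. For $\mu\in[\mu_m,\mu_M]$ let $\hat f(N,\mu):=(\hat\rho+\hat\mu)/(\rho+\mu)$ and $$V^N(x,N,\mu):=\sup_{\tau\in\mathcal T(\mathbb F^B)}\mathsf E_x\Big[\int_0^\tau e^{-(\rho+\mu)t}(\alpha+\nu\mu)X_tdt+e^{-(\rho+\mu)\tau}\hat f(N,\mu)(X_\tau-K)\Big].$$ *)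

theory Defs
  imports "HOL-Probability.Probability"
begin

definition std_BM :: "'a measure \<Rightarrow> (real \<Rightarrow> 'a \<Rightarrow> real) \<Rightarrow> bool" where
  "std_BM M B \<longleftrightarrow> prob_space M \<and>
     (\<forall>t. B t \<in> borel_measurable M) \<and>
     (\<forall>\<omega>\<in>space M. B 0 \<omega> = 0 \<and> continuous_on {0..} (\<lambda>t. B t \<omega>)) \<and>
     (\<forall>s t. 0 \<le> s \<and> s < t \<longrightarrow>
        distributed M lborel (\<lambda>\<omega>. B t \<omega> - B s \<omega>) (normal_density 0 (sqrt (t - s)))) \<and>
     (\<forall>(ts :: nat \<Rightarrow> real) n. 0 \<le> ts 0 \<and> (\<forall>i<n. ts i < ts (Suc i)) \<longrightarrow>
        prob_space.indep_vars M (\<lambda>_. borel) (\<lambda>i \<omega>. B (ts (Suc i)) \<omega> - B (ts i) \<omega>) {..<n})"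

definition nat_filt :: "'a measure \<Rightarrow> (real \<Rightarrow> 'a \<Rightarrow> real) \<Rightarrow> real \<Rightarrow> 'a set set" where
  "nat_filt M B t = (\<Union>s\<in>{0..t}. {B s -` A \<inter> space M | A. A \<in> sets borel})"

definition null_subsets :: "'a measure \<Rightarrow> 'a set set" where
  "null_subsets M = {N. \<exists>N'\<in>null_sets M. N \<subseteq> N'}"

definition aug_filt :: "'a measure \<Rightarrow> (real \<Rightarrow> 'a \<Rightarrow> real) \<Rightarrow> real \<Rightarrow> 'a measure" where
  "aug_filt M B t = sigma (space M) (nat_filt M B t \<union> null_subsets M)"

definition BM_stopping_time :: "'a measure \<Rightarrow> (real \<Rightarrow> 'a \<Rightarrow> real) \<Rightarrow> ('a \<Rightarrow> ennreal) \<Rightarrow> bool" where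
  "BM_stopping_time M B \<tau> \<longleftrightarrow>
     (\<forall>t\<ge>0. {\<omega>\<in>space M. \<tau> \<omega> \<le> ennreal t} \<in> sets (aug_filt M B t))"

definition GBM :: "(real \<Rightarrow> 'a \<Rightarrow> real) \<Rightarrow> real \<Rightarrow> real \<Rightarrow> real \<Rightarrow> real \<Rightarrow> real \<Rightarrow> 'a \<Rightarrow> real" where
  "GBM B \<theta> \<alpha> \<sigma> x t \<omega> = x * exp ((\<theta> - \<alpha> - \<sigma>\<^sup>2 / 2) * t + \<sigma> * B t \<omega>)"

definition fhat :: "real \<Rightarrow> real \<Rightarrow> real \<Rightarrow> real \<Rightarrow> real" where
  "fhat \<rho> \<rho>h \<mu>h \<mu> = (\<rho>h + \<mu>h) / (\<rho> + \<mu>)"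

definition reward ::
  "(real \<Rightarrow> 'a \<Rightarrow> real) \<Rightarrow> real \<Rightarrow> real \<Rightarrow> real \<Rightarrow> real \<Rightarrow> real \<Rightarrow> real \<Rightarrow> real \<Rightarrow> real
     \<Rightarrow> real \<Rightarrow> real \<Rightarrow> ('a \<Rightarrow> ennreal) \<Rightarrow> 'a \<Rightarrow> real" where
  "reward B \<theta> \<alpha> \<sigma> \<rho> \<nu> K \<rho>h \<mu>h x \<mu> \<tau> \<omega> =
     (LINT t:{t. 0 \<le> t \<and> ennreal t < \<tau> \<omega>}|lborel.
         exp (-(\<rho> + \<mu>) * t) * (\<alpha> + \<nu> * \<mu>) * GBM B \<theta> \<alpha> \<sigma> x t \<omega>)
     + (if \<tau> \<omega> = \<infinity> then 0
        else exp (-(\<rho> + \<mu>) * enn2real (\<tau> \<omega>)) * fhat \<rho> \<rho>h \<mu>h \<mu>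
               * (GBM B \<theta> \<alpha> \<sigma> x (enn2real (\<tau> \<omega>)) \<omega> - K))"

text \<open>Value function V^N(x,N,\<mu>) (expectation taken on the completion of M, on which
  all augmented-filtration events are measurable).\<close>
definition VN ::
  "'a measure \<Rightarrow> (real \<Rightarrow> 'a \<Rightarrow> real) \<Rightarrow> real \<Rightarrow> real \<Rightarrow> real \<Rightarrow> real \<Rightarrow> real \<Rightarrow> real \<Rightarrow> real
     \<Rightarrow> real \<Rightarrow> real \<Rightarrow> real \<Rightarrow> real" where
  "VN M B \<theta> \<alpha> \<sigma> \<rho> \<nu> K \<rho>h \<mu>h x \<mu> =
     (SUP \<tau>\<in>{\<tau>. BM_stopping_time M B \<tau>}.
        integral\<^sup>L (completion M) (reward B \<theta> \<alpha> \<sigma> \<rho> \<nu> K \<rho>h \<mu>h x \<mu> \<tau>))"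

end

theory Submission
  imports Defs
begin


lemma young_exp:
  fixes a b p q :: real
  assumes "p > 1" "q = p / (p - 1)"
  shows "exp (a + b) \<le> exp (p * a) + exp (q * b)"
proof -
  have "p - 1 > 0" using assms by simp
  then have q1: "q > 1" using assms by (simp add: less_divide_eq)
  have "1/q = (p-1)/p" unfolding assms(2) by simp
  moreover have "1/p + (p-1)/p = 1" using \<open>p - 1 > 0\<close> by (simp add: field_simps)
  ultimately have w: "1/p + 1/q = 1" by simp
  have "a + b = (1/p) * (p*a) + (1/q) * (q*b)" using assms q1 by (simp add: field_simps)
  also have "\<dots> \<le> (1/p) * max (p*a) (q*b) + (1/q) * max (p*a) (q*b)"
    using assms q1 by (intro add_mono mult_left_mono) auto
  also have "\<dots> = max (p*a) (q*b)" using w by (metis distrib_right mult_1)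
  finally have "exp (a+b) \<le> exp (max (p*a) (q*b))" by simp
  also have "\<dots> \<le> exp (p * a) + exp (q * b)" by (simp add: max_def add_increasing add_increasing2)
  finally show ?thesis .
qed

lemma exp_div_le:
  fixes y r :: real assumes "r \<ge> 1"
  shows "exp (y / r) \<le> 1 + exp y"
proof (cases "y \<le> 0")
  case True
  then have "y / r \<le> 0" using assms by (simp add: divide_nonpos_pos)
  then have "exp (y/r) \<le> 1" by simp
  then show ?thesis by (smt (verit) exp_gt_zero)
next
  case False
  then have "y / r \<le> y" using assms by (simp add: divide_le_eq mult_le_cancel_left1)
  then show ?thesis by (smt (verit) exp_le_cancel_iff)
qed

lemma lin_le_geom: "real j + 1 \<le> 8 * (9/8::real) ^ j"
proof (induction j)
  case 0 then show ?case by simp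
next
  case (Suc j)
  have "1 \<le> (9/8::real)^j" by (simp add: one_le_power)
  then show ?case using Suc by (simp; linarith)
qed

lemma normal_mgf_nn:
  fixes s a :: real assumes "s > 0"
  shows "(\<integral>\<^sup>+ z. ennreal (normal_density 0 s z) * ennreal (exp (a * z)) \<partial>lborel) = ennreal (exp (a^2 * s^2 / 2))"
proof -
  have eq: "normal_density 0 s z * exp (a * z) = exp (a^2 * s^2 / 2) * normal_density (a * s^2) s z" for z
  proof -
    have "-(z - 0)\<^sup>2 / (2 * s\<^sup>2) + a * z = a^2 * s^2 / 2 + (-(z - a * s^2)\<^sup>2 / (2 * s\<^sup>2))"
      using assms by (simp add: field_simps power2_eq_square)
    then have "exp (-(z - 0)\<^sup>2 / (2 * s\<^sup>2)) * exp (a * z) = exp (a^2 * s^2 / 2) * exp (-(z - a * s^2)\<^sup>2 / (2 * s\<^sup>2))"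
      by (metis exp_add)
    then show ?thesis unfolding normal_density_def by (simp add: ac_simps)
  qed
  have "(\<integral>\<^sup>+ z. ennreal (normal_density 0 s z) * ennreal (exp (a * z)) \<partial>lborel)
      = (\<integral>\<^sup>+ z. ennreal (exp (a^2 * s^2 / 2)) * ennreal (normal_density (a * s^2) s z) \<partial>lborel)"
    by (intro nn_integral_cong) (simp add: ennreal_mult'[symmetric] eq)
  also have "\<dots> = ennreal (exp (a^2 * s^2 / 2)) * (\<integral>\<^sup>+ z. ennreal (normal_density (a * s^2) s z) \<partial>lborel)"
    by (rule nn_integral_cmult) simp
  also have "(\<integral>\<^sup>+ z. ennreal (normal_density (a * s^2) s z) \<partial>lborel) = 1"
    using integrable_normal_density[OF assms] integral_normal_density[OF assms]
    by (subst nn_integral_eq_integral) auto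
  finally show ?thesis by simp
qed

lemma exp_abs_le: fixes a d :: real shows "exp (a * \<bar>d\<bar>) \<le> exp (a * d) + exp ((-a) * d)"
proof (cases "d \<ge> 0")
  case True then show ?thesis using exp_gt_zero[of "(-a)*d"] by simp
next
  case False then show ?thesis using exp_gt_zero[of "a*d"] by simp
qed

lemma std_BM_inc:
  assumes "std_BM M B" "0 \<le> s" "s < t"
  shows "distributed M lborel (\<lambda>\<omega>. B t \<omega> - B s \<omega>) (\<lambda>x. ennreal (normal_density 0 (sqrt (t - s)) x))"
  using assms unfolding std_BM_def by blast

lemma std_BM_meas: "std_BM M B \<Longrightarrow> B t \<in> borel_measurable M"
  unfolding std_BM_def by blast

lemma std_BM_prob: "std_BM M B \<Longrightarrow> prob_space M"
  unfolding std_BM_def by blast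

lemma std_BM_zero: "std_BM M B \<Longrightarrow> \<omega> \<in> space M \<Longrightarrow> B 0 \<omega> = 0"
  unfolding std_BM_def by blast

lemma std_BM_cont: "std_BM M B \<Longrightarrow> \<omega> \<in> space M \<Longrightarrow> continuous_on {0..} (\<lambda>t. B t \<omega>)"
  unfolding std_BM_def by blast

lemma BM_mgf:
  assumes "std_BM M B" "0 \<le> s" "s < t"
  shows "(\<integral>\<^sup>+ \<omega>. ennreal (exp (a * (B t \<omega> - B s \<omega>))) \<partial>M) = ennreal (exp (a^2 * (t - s) / 2))"
proof -
  have "(\<integral>\<^sup>+ \<omega>. ennreal (exp (a * (B t \<omega> - B s \<omega>))) \<partial>M)
     = (\<integral>\<^sup>+ z. ennreal (normal_density 0 (sqrt (t - s)) z) * ennreal (exp (a * z)) \<partial>lborel)"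
    by (rule distributed_nn_integral[OF std_BM_inc[OF assms], symmetric]) simp
  also have "\<dots> = ennreal (exp (a^2 * (sqrt (t - s))^2 / 2))"
    using assms by (intro normal_mgf_nn) simp
  finally show ?thesis using assms by simp
qed

lemma BM_mgf_abs:
  assumes "std_BM M B" "0 \<le> s" "s \<le> t"
  shows "(\<integral>\<^sup>+ \<omega>. ennreal (exp (a * \<bar>B t \<omega> - B s \<omega>\<bar>)) \<partial>M) \<le> 2 * ennreal (exp (a^2 * (t - s) / 2))"
proof (cases "s = t")
  case True
  interpret prob_space M using std_BM_prob[OF assms(1)] .
  show ?thesis using True by (simp add: emeasure_space_1)
next
  case False
  then have st: "s < t" using assms by simp
  have "(\<integral>\<^sup>+ \<omega>. ennreal (exp (a * \<bar>B t \<omega> - B s \<omega>\<bar>)) \<partial>M)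
     \<le> (\<integral>\<^sup>+ \<omega>. ennreal (exp (a * (B t \<omega> - B s \<omega>))) + ennreal (exp ((-a) * (B t \<omega> - B s \<omega>))) \<partial>M)"
    by (intro nn_integral_mono) (simp add: ennreal_plus[symmetric] del: ennreal_plus add: exp_abs_le[where a=a and d="B t _ - B s _", simplified])
  also have "\<dots> = (\<integral>\<^sup>+ \<omega>. ennreal (exp (a * (B t \<omega> - B s \<omega>))) \<partial>M) + (\<integral>\<^sup>+ \<omega>. ennreal (exp ((-a) * (B t \<omega> - B s \<omega>))) \<partial>M)"
    using std_BM_meas[OF assms(1)] by (intro nn_integral_add) auto
  also have "\<dots> = 2 * ennreal (exp (a^2 * (t - s) / 2))"
    using BM_mgf[OF assms(1,2) st, of a] BM_mgf[OF assms(1,2) st, of "-a"] by (simp add: mult_2)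
  finally show ?thesis .
qed



lemma exp_convex_sum:
  fixes v y :: "nat \<Rightarrow> real"
  assumes S: "finite S" and v: "\<And>j. j \<in> S \<Longrightarrow> 0 \<le> v j" and vs: "sum v S \<le> 1"
  shows "exp (\<Sum>j\<in>S. v j * y j) \<le> 1 + (\<Sum>j\<in>S. v j * exp (y j))"
proof -
  define a where "a = (\<lambda>i. case i of None \<Rightarrow> 1 - sum v S | Some j \<Rightarrow> v j)"
  define z where "z = (\<lambda>i. case i of None \<Rightarrow> 0 | Some j \<Rightarrow> y j)"
  let ?S = "insert None (Some ` S)"
  have sumS: "(\<Sum>i\<in>?S. f i) = f None + (\<Sum>j\<in>S. f (Some j))" for f :: "nat option \<Rightarrow> real"
    using S by (simp add: sum.reindex)
  have "exp (\<Sum>i\<in>?S. a i *\<^sub>R z i) \<le> (\<Sum>i\<in>?S. a i * exp (z i))"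
    by (rule convex_on_sum[OF _ _ exp_convex]) (use S v vs in \<open>auto simp: sumS a_def\<close>)
  then have "exp (\<Sum>j\<in>S. v j * y j) \<le> (1 - sum v S) + (\<Sum>j\<in>S. v j * exp (y j))"
    by (simp add: sumS a_def z_def)
  also have "\<dots> \<le> 1 + (\<Sum>j\<in>S. v j * exp (y j))"
    using v by (simp add: sum_nonneg)
  finally show ?thesis .
qed

definition dmax :: "(real \<Rightarrow> real) \<Rightarrow> nat \<Rightarrow> real" where
  "dmax b j = Max ((\<lambda>k. \<bar>b (real (Suc k) / 2^j) - b (real k / 2^j)\<bar>) ` {..<2^j})"

lemma dmax_ge:
  assumes "k < 2^j"
  shows "\<bar>b (real (Suc k) / 2^j) - b (real k / 2^j)\<bar> \<le> dmax b j"
  unfolding dmax_def using assms by (intro Max_ge) auto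

lemma dmax_nonneg: "0 \<le> dmax b j"
proof -
  have "(0::nat) < 2^j" by simp
  from dmax_ge[OF this, of b] show ?thesis by (meson abs_ge_zero order_trans)
qed

lemma floor_double:
  fixes x :: real
  shows "\<lfloor>2 * x\<rfloor> = 2 * \<lfloor>x\<rfloor> \<or> \<lfloor>2 * x\<rfloor> = 2 * \<lfloor>x\<rfloor> + 1"
proof -
  have a: "of_int \<lfloor>x\<rfloor> \<le> x" "x < of_int \<lfloor>x\<rfloor> + 1" by linarith+
  show ?thesis
  proof (cases "2 * x < 2 * of_int \<lfloor>x\<rfloor> + 1")
    case True
    then have "\<lfloor>2 * x\<rfloor> = 2 * \<lfloor>x\<rfloor>" using a by (subst floor_eq_iff) auto
    then show ?thesis by simp
  next
    case False
    then have "\<lfloor>2 * x\<rfloor> = 2 * \<lfloor>x\<rfloor> + 1" using a by (simp add: floor_eq_iff, linarith)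
    then show ?thesis by simp
  qed
qed

definition tgrid :: "nat \<Rightarrow> real \<Rightarrow> real" where
  "tgrid J t = of_int \<lfloor>2^J * t\<rfloor> / 2^J"

lemma tgrid_bounds:
  assumes "0 \<le> t" "t \<le> 1"
  shows "0 \<le> tgrid J t" "tgrid J t \<le> t" "t < tgrid J t + 1 / 2^J"
proof -
  have p: "(0::real) < 2^J" by simp
  have "0 \<le> \<lfloor>2^J * t\<rfloor>" using assms by simp
  then show "0 \<le> tgrid J t" unfolding tgrid_def by simp
  have "of_int \<lfloor>2^J * t\<rfloor> \<le> 2^J * t" by linarith
  then show "tgrid J t \<le> t" unfolding tgrid_def using p by (simp add: divide_le_eq mult.commute)
  have "2^J * t < of_int \<lfloor>2^J * t\<rfloor> + 1" by linarith
  then show "t < tgrid J t + 1 / 2^J" unfolding tgrid_def using p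
    by (simp add: field_simps)
qed

lemma chain_bound:
  assumes "0 \<le> t" "t \<le> 1"
  shows "\<bar>b (tgrid J t) - b 0\<bar> \<le> (\<Sum>j\<le>J. dmax b j)"
proof (induction J)
  case 0
  show ?case
  proof (cases "t = 1")
    case True
    then show ?thesis using dmax_ge[of 0 0 b] by (simp add: tgrid_def)
  next
    case False
    then have "\<lfloor>t\<rfloor> = 0" using assms by (subst floor_eq_iff) auto
    then show ?thesis using dmax_nonneg[of b 0] by (simp add: tgrid_def)
  qed
next
  case (Suc J)
  define k where "k = \<lfloor>2^J * t\<rfloor>"
  have k0: "0 \<le> k" using assms unfolding k_def by simp
  have eq2: "(2::real)^Suc J * t = 2 * (2^J * t)" by simp
  have tJ: "tgrid J t = of_int (2*k) / 2^Suc J" unfolding tgrid_def k_def by simp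
  have "\<bar>b (tgrid (Suc J) t) - b (tgrid J t)\<bar> \<le> dmax b (Suc J)"
  proof (cases "\<lfloor>2^Suc J * t\<rfloor> = 2 * k")
    case True
    then have "tgrid (Suc J) t = tgrid J t" using tJ unfolding tgrid_def by simp
    then show ?thesis using dmax_nonneg by simp
  next
    case False
    then have f: "\<lfloor>2^Suc J * t\<rfloor> = 2 * k + 1" using floor_double[of "2^J * t"] unfolding k_def eq2 by auto
    have "tgrid (Suc J) t \<le> t" using tgrid_bounds assms by blast
    then have "tgrid (Suc J) t \<le> 1" using assms by linarith
    then have "of_int (2 * k + 1) / 2^Suc J \<le> (1::real)" using f unfolding tgrid_def by simp
    then have "of_int (2 * k + 1) \<le> (2::real)^Suc J" by (simp add: divide_le_eq)
    also have "(2::real)^Suc J = of_int ((2::int)^Suc J)" by simp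
    finally have "2 * k + 1 \<le> 2^Suc J" by (simp only: of_int_le_iff)
    then have lt: "nat (2*k) < 2^Suc J" using k0
      by (simp add: nat_less_iff)
    have "\<bar>b (real (Suc (nat (2*k))) / 2^Suc J) - b (real (nat (2*k)) / 2^Suc J)\<bar> \<le> dmax b (Suc J)"
      by (rule dmax_ge[OF lt])
    moreover have "real (Suc (nat (2*k))) = of_int (2*k+1)" "real (nat (2*k)) = of_int (2*k)" using k0 by auto
    ultimately show ?thesis using f tJ unfolding tgrid_def by (simp add: add.commute)
  qed
  then show ?case using Suc by simp
qed

lemma tgrid_lim:
  assumes "0 \<le> t" "t \<le> 1"
  shows "(\<lambda>J. tgrid J t) \<longlonglongrightarrow> t"
proof -
  have "(\<lambda>J. t - 1 / 2^J) \<longlonglongrightarrow> t - 0"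
    by (intro tendsto_intros LIMSEQ_divide_realpow_zero) auto
  then have l: "(\<lambda>J. t - 1 / 2^J) \<longlonglongrightarrow> t" by simp
  have e1: "\<forall>\<^sub>F J in sequentially. t - 1 / 2^J \<le> tgrid J t"
  proof (intro always_eventually allI)
    fix J show "t - 1 / 2^J \<le> tgrid J t" using tgrid_bounds(3)[OF assms, of J] by linarith
  qed
  have e2: "\<forall>\<^sub>F J in sequentially. tgrid J t \<le> t"
    using tgrid_bounds(2)[OF assms] by (intro always_eventually allI) auto
  show ?thesis
    by (rule real_tendsto_sandwich[OF e1 e2 l tendsto_const])
qed

definition vw :: "nat \<Rightarrow> real" where "vw j = (1/4) * (3/4)^j"

lemma vw_pos: "0 < vw j" unfolding vw_def by simp

lemma vw_nz[simp]: "vw j \<noteq> 0" using vw_pos[of j] by simp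

lemma vw_sum_eq: "(\<Sum>j\<le>J. vw j) = 1 - (3/4)^Suc J"
  by (induction J) (simp_all add: vw_def)

lemma vw_sum_le: "(\<Sum>j\<le>J. vw j) \<le> 1"
  unfolding vw_sum_eq by simp

lemma chain_exp_bound:
  fixes b :: "real \<Rightarrow> real" and \<beta> :: real
  assumes cont: "continuous_on {0..1} b" and \<beta>: "0 \<le> \<beta>" and t: "0 \<le> t" "t \<le> 1"
  shows "ennreal (exp (\<beta> * \<bar>b t - b 0\<bar>)) \<le> 1 + (\<Sum>j. ennreal (vw j * exp (\<beta> * dmax b j / vw j)))"
proof -
  let ?C = "1 + (\<Sum>j. ennreal (vw j * exp (\<beta> * dmax b j / vw j)))"
  have le: "ennreal (exp (\<beta> * \<bar>b (tgrid J t) - b 0\<bar>)) \<le> ?C" for J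
  proof -
    have "exp (\<beta> * \<bar>b (tgrid J t) - b 0\<bar>) \<le> exp (\<beta> * (\<Sum>j\<le>J. dmax b j))"
      using chain_bound[OF t, of b J] \<beta> by (simp add: mult_left_mono)
    also have "\<beta> * (\<Sum>j\<le>J. dmax b j) = (\<Sum>j\<le>J. vw j * (\<beta> * dmax b j / vw j))"
      using vw_pos by (simp add: sum_distrib_left)
    also have "exp \<dots> \<le> 1 + (\<Sum>j\<le>J. vw j * exp (\<beta> * dmax b j / vw j))"
      by (rule exp_convex_sum) (auto simp: vw_sum_le less_imp_le[OF vw_pos])
    finally have "ennreal (exp (\<beta> * \<bar>b (tgrid J t) - b 0\<bar>)) \<le> ennreal (1 + (\<Sum>j\<le>J. vw j * exp (\<beta> * dmax b j / vw j)))"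
      by (rule ennreal_leI)
    also have "\<dots> = 1 + ennreal (\<Sum>j\<le>J. vw j * exp (\<beta> * dmax b j / vw j))"
      by (subst ennreal_plus) (auto intro!: sum_nonneg simp: vw_def)
    also have "ennreal (\<Sum>j\<le>J. vw j * exp (\<beta> * dmax b j / vw j)) = (\<Sum>j\<le>J. ennreal (vw j * exp (\<beta> * dmax b j / vw j)))"
      by (subst sum_ennreal) (auto simp: vw_def)
    also have "(\<Sum>j\<le>J. ennreal (vw j * exp (\<beta> * dmax b j / vw j))) \<le> (\<Sum>j. ennreal (vw j * exp (\<beta> * dmax b j / vw j)))"
      by (rule sum_le_suminf) auto
    finally show ?thesis by (simp add: add_left_mono)
  qed
  have "(\<lambda>J. b (tgrid J t)) \<longlonglongrightarrow> b t"
  proof -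
    have "continuous (at t within {0..1}) b" using cont t by (simp add: continuous_on_eq_continuous_within)
    moreover have "(\<lambda>J. tgrid J t) \<longlonglongrightarrow> t" by (rule tgrid_lim[OF t])
    moreover have "\<forall>J. tgrid J t \<in> {0..1}" using tgrid_bounds[OF t] t by (auto intro: order_trans)
    ultimately show ?thesis by (simp add: continuous_within_sequentially comp_def)
  qed
  then have "(\<lambda>J. ennreal (exp (\<beta> * \<bar>b (tgrid J t) - b 0\<bar>))) \<longlonglongrightarrow> ennreal (exp (\<beta> * \<bar>b t - b 0\<bar>))"
    by (intro tendsto_intros)
  then show ?thesis
    by (rule LIMSEQ_le_const2) (use le in auto)
qed



lemma ennreal_lin:
  fixes a b c :: real assumes "0 \<le> a" "0 \<le> b" "0 \<le> c"
  shows "ennreal a + ennreal b * ennreal c = ennreal (a + b * c)"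
  using assms by (simp add: ennreal_mult)

lemma exp_max_le_sum:
  fixes f :: "nat \<Rightarrow> real" and c :: real
  assumes "c \<ge> 0" "K \<noteq> {}" "finite K"
  shows "exp (c * Max (f ` K)) \<le> (\<Sum>k\<in>K. exp (c * f k))"
proof -
  have "Max (f ` K) \<in> f ` K" using assms by (intro Max_in) auto
  then obtain k0 where k0: "k0 \<in> K" "Max (f ` K) = f k0" by auto
  have "exp (c * f k0) \<le> (\<Sum>k\<in>K. exp (c * f k))"
    by (rule member_le_sum) (use assms k0 in auto)
  then show ?thesis using k0 by simp
qed

lemma dmax_exp_bound:
  assumes BM: "std_BM M B" and n: "0 \<le> n" and \<gamma>: "0 \<le> \<gamma>" and r: "1 \<le> r"
  shows "(\<integral>\<^sup>+ \<omega>. ennreal (exp (\<gamma> * dmax (\<lambda>s. B (n + s) \<omega>) j)) \<partial>M)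
     \<le> ennreal (2 * exp (((real j + 1) * ln 2 + (r * \<gamma>)^2 / 2^j / 2) / r))"
proof -
  interpret prob_space M using std_BM_prob[OF BM] .
  define Q where "Q = (r * \<gamma>)^2 / 2^j / 2"
  define L where "L = (real j + 1) * ln 2 + Q"
  define \<Delta> where "\<Delta> = (\<lambda>k \<omega>. B (n + real (Suc k) / 2^j) \<omega> - B (n + real k / 2^j) \<omega>)"
  have r0: "r > 0" using r by simp
  have pw: "exp (\<gamma> * dmax (\<lambda>s. B (n + s) \<omega>) j)
      \<le> exp (L / r) + exp (L / r - L) * (\<Sum>k<2^j. exp ((r * \<gamma>) * \<bar>\<Delta> k \<omega>\<bar>))" for \<omega>
  proof -
    let ?D = "dmax (\<lambda>s. B (n + s) \<omega>) j"
    have "exp (\<gamma> * ?D) = exp (L / r) * exp ((r * \<gamma> * ?D - L) / r)"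
      using r0 by (simp add: exp_add[symmetric] field_simps)
    also have "\<dots> \<le> exp (L / r) * (1 + exp (r * \<gamma> * ?D - L))"
      by (intro mult_left_mono exp_div_le r) simp
    also have "\<dots> = exp (L / r) + exp (L / r - L) * exp (r * \<gamma> * ?D)"
      by (simp add: algebra_simps exp_diff exp_add)
    also have "exp (r * \<gamma> * ?D) \<le> (\<Sum>k<2^j. exp ((r * \<gamma>) * \<bar>\<Delta> k \<omega>\<bar>))"
      unfolding dmax_def \<Delta>_def using r \<gamma>
      by (intro exp_max_le_sum[where f="\<lambda>k. \<bar>B (n + real (Suc k) / 2^j) \<omega> - B (n + real k / 2^j) \<omega>\<bar>", unfolded image_comp comp_def]) (auto simp: lessThan_empty_iff)
    finally show ?thesis by (simp add: mult_left_mono)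
  qed
  have meas: "\<Delta> k \<in> borel_measurable M" for k
    unfolding \<Delta>_def using std_BM_meas[OF BM] by measurable
  have each: "(\<integral>\<^sup>+ \<omega>. ennreal (exp ((r * \<gamma>) * \<bar>\<Delta> k \<omega>\<bar>)) \<partial>M) \<le> 2 * ennreal (exp (Q))" for k
  proof -
    have le: "n + real k / 2^j \<le> n + real (Suc k) / 2^j" by (simp add: divide_right_mono)
    have "(\<integral>\<^sup>+ \<omega>. ennreal (exp ((r * \<gamma>) * \<bar>\<Delta> k \<omega>\<bar>)) \<partial>M)
        \<le> 2 * ennreal (exp ((r * \<gamma>)^2 * ((n + real (Suc k) / 2^j) - (n + real k / 2^j)) / 2))"
      unfolding \<Delta>_def by (rule BM_mgf_abs[OF BM _ le]) (use n in simp)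
    also have "(n + real (Suc k) / 2^j) - (n + real k / 2^j) = 1 / 2^j" by (simp add: diff_divide_distrib[symmetric])
    finally show ?thesis by (simp add: Q_def)
  qed
  have "(\<integral>\<^sup>+ \<omega>. ennreal (exp (\<gamma> * dmax (\<lambda>s. B (n + s) \<omega>) j)) \<partial>M)
     \<le> (\<integral>\<^sup>+ \<omega>. ennreal (exp (L / r)) + ennreal (exp (L / r - L)) * (\<Sum>k<2^j. ennreal (exp ((r * \<gamma>) * \<bar>\<Delta> k \<omega>\<bar>))) \<partial>M)"
  proof (intro nn_integral_mono)
    fix \<omega>
    have "ennreal (exp (\<gamma> * dmax (\<lambda>s. B (n + s) \<omega>) j)) \<le> ennreal (exp (L / r) + exp (L / r - L) * (\<Sum>k<2^j. exp ((r * \<gamma>) * \<bar>\<Delta> k \<omega>\<bar>)))"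
      by (rule ennreal_leI[OF pw])
    also have "\<dots> = ennreal (exp (L / r)) + ennreal (exp (L / r - L)) * (\<Sum>k<2^j. ennreal (exp ((r * \<gamma>) * \<bar>\<Delta> k \<omega>\<bar>)))"
      by (simp add: ennreal_plus ennreal_mult sum_nonneg)
    finally show "ennreal (exp (\<gamma> * dmax (\<lambda>s. B (n + s) \<omega>) j)) \<le> \<dots>" .
  qed
  also have "\<dots> = ennreal (exp (L / r)) + ennreal (exp (L / r - L)) * (\<Sum>k<2^j. (\<integral>\<^sup>+ \<omega>. ennreal (exp ((r * \<gamma>) * \<bar>\<Delta> k \<omega>\<bar>)) \<partial>M))"
    using meas by (simp add: nn_integral_add nn_integral_cmult nn_integral_sum emeasure_space_1 del: sum_ennreal)
  also have "\<dots> \<le> ennreal (exp (L / r)) + ennreal (exp (L / r - L)) * (\<Sum>k<(2::nat)^j. 2 * ennreal (exp Q))"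
    by (intro add_left_mono mult_left_mono sum_mono each) auto
  finally have main: "(\<integral>\<^sup>+ \<omega>. ennreal (exp (\<gamma> * dmax (\<lambda>s. B (n + s) \<omega>) j)) \<partial>M)
     \<le> ennreal (exp (L / r)) + ennreal (exp (L / r - L)) * (\<Sum>k<(2::nat)^j. 2 * ennreal (exp Q))" .
  have S: "(\<Sum>k<(2::nat)^j. 2 * ennreal (exp Q)) = ennreal (2 ^ j * 2 * exp Q)"
  proof -
    have "(\<Sum>k<(2::nat)^j. 2 * ennreal (exp Q)) = of_nat (2^j) * (2 * ennreal (exp Q))" by simp
    also have "\<dots> = ennreal (real (2^j)) * (ennreal 2 * ennreal (exp Q))"
      by (simp only: ennreal_of_nat_eq_real_of_nat) simp
    also have "\<dots> = ennreal (real (2^j) * (2 * exp Q))"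
      by (simp add: ennreal_mult)
    also have "\<dots> = ennreal (2 ^ j * 2 * exp Q)" by (simp add: mult.assoc)
    finally show ?thesis .
  qed
  have E: "exp (L / r - L) * (2 ^ j * 2 * exp Q) = exp (L / r)"
  proof -
    have "exp ((real j + 1) * ln 2) = exp (real (Suc j) * ln 2)" by simp
    also have "\<dots> = exp (ln 2) ^ Suc j" by (rule exp_of_nat_mult)
    also have "\<dots> = 2 ^ (j+1)" by simp
    finally have "exp ((real j + 1) * ln 2) = 2 ^ (j+1)" .
    then have "exp L = 2 ^ j * 2 * exp Q" unfolding L_def by (simp add: exp_add)
    then show ?thesis by (simp add: exp_diff)
  qed
  have fin: "ennreal (exp (L / r)) + ennreal (exp (L / r - L)) * (\<Sum>k<(2::nat)^j. 2 * ennreal (exp Q))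
      = ennreal (2 * exp (L / r))"
  proof -
    have "ennreal (exp (L / r)) + ennreal (exp (L / r - L)) * ennreal (2 ^ j * 2 * exp Q)
        = ennreal (exp (L / r) + exp (L / r - L) * (2 ^ j * 2 * exp Q))"
      by (rule ennreal_lin) simp_all
    also have "\<dots> = ennreal (2 * exp (L / r))" unfolding E by simp
    finally show ?thesis unfolding S .
  qed
  show ?thesis using main unfolding fin unfolding L_def Q_def .
qed



lemma vw_sums: "vw sums 1"
proof -
  have "(\<lambda>j. (3/4::real)^j) sums (1 / (1 - 3/4))" by (rule geometric_sums) simp
  then have "(\<lambda>j. (1/4) * (3/4::real)^j) sums ((1/4) * (1 / (1 - 3/4)))" by (rule sums_mult)
  then show ?thesis unfolding vw_def by simp
qed

lemma dmax_meas:
  assumes BM: "std_BM M B"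
  shows "(\<lambda>\<omega>. dmax (\<lambda>s. B (n + s) \<omega>) j) \<in> borel_measurable M"
  unfolding dmax_def using std_BM_meas[OF BM] by measurable

lemma dmax_exp_bound':
  assumes BM: "std_BM M B" and n: "0 \<le> n" and \<beta>: "0 \<le> \<beta>"
  shows "(\<integral>\<^sup>+ \<omega>. ennreal (exp (\<beta> * dmax (\<lambda>s. B (n + s) \<omega>) j / vw j)) \<partial>M)
     \<le> ennreal (512 * exp (8 * \<beta>^2))"
proof -
  define r :: real where "r = (9/8)^j"
  define \<gamma> where "\<gamma> = \<beta> / vw j"
  have r1: "1 \<le> r" unfolding r_def by (simp add: one_le_power)
  have \<gamma>0: "0 \<le> \<gamma>" unfolding \<gamma>_def using \<beta> vw_pos[of j] by simp
  have "(\<integral>\<^sup>+ \<omega>. ennreal (exp (\<beta> * dmax (\<lambda>s. B (n + s) \<omega>) j / vw j)) \<partial>M)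
     = (\<integral>\<^sup>+ \<omega>. ennreal (exp (\<gamma> * dmax (\<lambda>s. B (n + s) \<omega>) j)) \<partial>M)"
    unfolding \<gamma>_def by (simp add: field_simps)
  also have "\<dots> \<le> ennreal (2 * exp (((real j + 1) * ln 2 + (r * \<gamma>)^2 / 2^j / 2) / r))"
    by (rule dmax_exp_bound[OF BM n \<gamma>0 r1])
  also have "\<dots> \<le> ennreal (512 * exp (8 * \<beta>^2))"
  proof (rule ennreal_leI)
    have r0: "0 < r" using r1 by simp
    have a: "(real j + 1) * ln 2 / r \<le> 8 * ln 2"
    proof -
      have "real j + 1 \<le> 8 * r" unfolding r_def by (rule lin_le_geom)
      then have "(real j + 1) / r \<le> 8" using r0 by (simp add: divide_le_eq)
      then have "(real j + 1) / r * ln 2 \<le> 8 * ln 2" by (rule mult_right_mono) simp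
      moreover have "(real j + 1) * ln 2 / r = (real j + 1) / r * ln 2" by simp
      ultimately show ?thesis by linarith
    qed
    have p: "(9/8::real)^j * (16/9)^j = 2^j" by (simp add: power_mult_distrib[symmetric])
    have b: "(r * \<gamma>)^2 / 2^j / 2 / r = 8 * \<beta>^2"
    proof -
      have "vw j ^ 2 = (1/16) * (9/16)^j" unfolding vw_def by (simp add: power_mult_distrib power_mult[symmetric] power2_eq_square power_mult_distrib[symmetric])
      then have "(r * \<gamma>)^2 / 2^j / 2 / r = r * \<beta>^2 / ((1/16) * (9/16)^j) / 2^j / 2"
        unfolding \<gamma>_def using r0 by (simp add: power2_eq_square field_simps)
      also have "\<dots> = 8 * \<beta>^2 * (r * (16/9)^j / 2^j)"
        by (simp add: field_simps power_divide)
      also have "r * (16/9)^j / 2^j = 1" unfolding r_def using p by simp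
      finally show ?thesis by simp
    qed
    have "((real j + 1) * ln 2 + (r * \<gamma>)^2 / 2^j / 2) / r = (real j + 1) * ln 2 / r + (r * \<gamma>)^2 / 2^j / 2 / r"
      by (simp add: add_divide_distrib)
    also have "\<dots> \<le> 8 * ln 2 + 8 * \<beta>^2" using a b by simp
    finally have "exp (((real j + 1) * ln 2 + (r * \<gamma>)^2 / 2^j / 2) / r) \<le> exp (8 * ln 2) * exp (8 * \<beta>^2)"
      by (simp add: exp_add[symmetric])
    also have "exp (8 * ln 2) = (256::real)"
    proof -
      have "exp (real 8 * ln 2) = exp (ln 2) ^ 8" by (rule exp_of_nat_mult)
      then show ?thesis by simp
    qed
    finally show "2 * exp (((real j + 1) * ln 2 + (r * \<gamma>)^2 / 2^j / 2) / r) \<le> 512 * exp (8 * \<beta>^2)"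
      by simp
  qed
  finally show ?thesis .
qed

definition Wn :: "(real \<Rightarrow> 'a \<Rightarrow> real) \<Rightarrow> real \<Rightarrow> real \<Rightarrow> 'a \<Rightarrow> ennreal" where
  "Wn B \<beta> n \<omega> = 1 + (\<Sum>j. ennreal (vw j * exp (\<beta> * dmax (\<lambda>s. B (n + s) \<omega>) j / vw j)))"

lemma Wn_meas:
  assumes BM: "std_BM M B"
  shows "Wn B \<beta> n \<in> borel_measurable M"
  unfolding Wn_def using dmax_meas[OF BM] by measurable

lemma Wn_int:
  assumes BM: "std_BM M B" and n: "0 \<le> n" and \<beta>: "0 \<le> \<beta>"
  shows "(\<integral>\<^sup>+ \<omega>. Wn B \<beta> n \<omega> \<partial>M) \<le> ennreal (1 + 512 * exp (8 * \<beta>^2))"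
proof -
  interpret prob_space M using std_BM_prob[OF BM] .
  have m: "(\<lambda>\<omega>. ennreal (vw j * exp (\<beta> * dmax (\<lambda>s. B (n + s) \<omega>) j / vw j))) \<in> borel_measurable M" for j
    using dmax_meas[OF BM] by measurable
  have "(\<integral>\<^sup>+ \<omega>. Wn B \<beta> n \<omega> \<partial>M) = 1 + (\<Sum>j. \<integral>\<^sup>+ \<omega>. ennreal (vw j * exp (\<beta> * dmax (\<lambda>s. B (n + s) \<omega>) j / vw j)) \<partial>M)"
    unfolding Wn_def using m by (simp add: nn_integral_add nn_integral_suminf emeasure_space_1)
  also have "\<dots> \<le> 1 + (\<Sum>j. ennreal (vw j * (512 * exp (8 * \<beta>^2))))"
  proof (intro add_left_mono suminf_le allI)
    fix j
    have "(\<integral>\<^sup>+ \<omega>. ennreal (vw j * exp (\<beta> * dmax (\<lambda>s. B (n + s) \<omega>) j / vw j)) \<partial>M)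
        = ennreal (vw j) * (\<integral>\<^sup>+ \<omega>. ennreal (exp (\<beta> * dmax (\<lambda>s. B (n + s) \<omega>) j / vw j)) \<partial>M)"
      using dmax_meas[OF BM] vw_pos[of j] by (simp add: ennreal_mult nn_integral_cmult)
    also have "\<dots> \<le> ennreal (vw j) * ennreal (512 * exp (8 * \<beta>^2))"
      by (intro mult_left_mono dmax_exp_bound'[OF BM n \<beta>]) simp
    also have "\<dots> = ennreal (vw j * (512 * exp (8 * \<beta>^2)))"
      using vw_pos[of j] by (simp add: ennreal_mult)
    finally show "(\<integral>\<^sup>+ \<omega>. ennreal (vw j * exp (\<beta> * dmax (\<lambda>s. B (n + s) \<omega>) j / vw j)) \<partial>M) \<le> \<dots>" .
  qed auto
  also have "(\<Sum>j. ennreal (vw j * (512 * exp (8 * \<beta>^2)))) = ennreal (512 * exp (8 * \<beta>^2))"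
  proof -
    have "(\<lambda>j. vw j * (512 * exp (8 * \<beta>^2))) sums (1 * (512 * exp (8 * \<beta>^2)))"
      by (rule sums_mult2[OF vw_sums])
    then show ?thesis
      using vw_pos by (subst suminf_ennreal2) (auto simp: sums_iff less_imp_le)
  qed
  also have "1 + ennreal (512 * exp (8 * \<beta>^2)) = ennreal (1 + 512 * exp (8 * \<beta>^2))"
    by simp
  finally show ?thesis .
qed



definition pp :: "real \<Rightarrow> real \<Rightarrow> real" where "pp \<sigma> \<kappa> = 1 + \<kappa> / \<sigma>^2"
definition qq :: "real \<Rightarrow> real \<Rightarrow> real" where "qq \<sigma> \<kappa> = pp \<sigma> \<kappa> / (pp \<sigma> \<kappa> - 1)"
definition lam :: "real \<Rightarrow> real \<Rightarrow> real" where "lam \<sigma> \<kappa> = \<kappa> + \<sigma>^2 / 2"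

definition Gn :: "(real \<Rightarrow> 'a \<Rightarrow> real) \<Rightarrow> real \<Rightarrow> real \<Rightarrow> real \<Rightarrow> 'a \<Rightarrow> ennreal" where
  "Gn B \<sigma> \<kappa> n \<omega> = ennreal (exp (pp \<sigma> \<kappa> * \<sigma> * B n \<omega> - pp \<sigma> \<kappa> * (lam \<sigma> \<kappa> - \<kappa>/4) * n))
     + ennreal (exp (- (qq \<sigma> \<kappa> * (\<kappa>/4)) * n)) * Wn B (qq \<sigma> \<kappa> * \<sigma>) n \<omega>"

definition Gtot :: "(real \<Rightarrow> 'a \<Rightarrow> real) \<Rightarrow> real \<Rightarrow> real \<Rightarrow> 'a \<Rightarrow> ennreal" where
  "Gtot B \<sigma> \<kappa> \<omega> = (\<Sum>n. Gn B \<sigma> \<kappa> (real n) \<omega>)"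

lemma pq_facts:
  assumes "0 < \<sigma>" "0 < \<kappa>"
  shows "pp \<sigma> \<kappa> > 1" "qq \<sigma> \<kappa> > 0" "qq \<sigma> \<kappa> = pp \<sigma> \<kappa> / (pp \<sigma> \<kappa> - 1)"
proof -
  show p: "pp \<sigma> \<kappa> > 1" unfolding pp_def using assms by simp
  then show "qq \<sigma> \<kappa> > 0" unfolding qq_def by simp
  show "qq \<sigma> \<kappa> = pp \<sigma> \<kappa> / (pp \<sigma> \<kappa> - 1)" by (simp add: qq_def)
qed

lemma Gn_pointwise:
  assumes BM: "std_BM M B" and \<sigma>: "0 < \<sigma>" and \<kappa>: "0 < \<kappa>" and \<omega>: "\<omega> \<in> space M"
    and t: "real n \<le> t" "t \<le> real n + 1"
  shows "ennreal (exp (\<sigma> * B t \<omega> - lam \<sigma> \<kappa> * t)) \<le> Gn B \<sigma> \<kappa> (real n) \<omega>"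
proof -
  let ?p = "pp \<sigma> \<kappa>" and ?q = "qq \<sigma> \<kappa>" and ?l = "lam \<sigma> \<kappa>"
  define a where "a = \<sigma> * B (real n) \<omega> - ?l * real n + \<kappa>/4 * real n"
  define b where "b = \<sigma> * \<bar>B t \<omega> - B (real n) \<omega>\<bar> - \<kappa>/4 * real n"
  have l0: "0 \<le> ?l" unfolding lam_def using \<kappa> by simp
  have "\<sigma> * B t \<omega> - ?l * t \<le> a + b"
  proof -
    have "\<sigma> * (B t \<omega> - B (real n) \<omega>) \<le> \<sigma> * \<bar>B t \<omega> - B (real n) \<omega>\<bar>" using \<sigma> by (simp add: mult_left_mono)
    moreover have "?l * real n \<le> ?l * t" using l0 t by (simp add: mult_left_mono)
    ultimately show ?thesis unfolding a_def b_def by (simp add: algebra_simps)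
  qed
  then have "exp (\<sigma> * B t \<omega> - ?l * t) \<le> exp (a + b)" by simp
  also have "\<dots> \<le> exp (?p * a) + exp (?q * b)"
    by (rule young_exp) (use pq_facts[OF \<sigma> \<kappa>] in auto)
  also have "exp (?p * a) = exp (?p * \<sigma> * B (real n) \<omega> - ?p * (?l - \<kappa>/4) * real n)"
    unfolding a_def by (simp add: algebra_simps)
  also have "exp (?q * b) = exp (- (?q * (\<kappa>/4)) * real n) * exp ((?q * \<sigma>) * \<bar>B (real n + (t - real n)) \<omega> - B (real n + 0) \<omega>\<bar>)"
    unfolding b_def by (simp add: algebra_simps exp_add[symmetric])
  finally have 1: "ennreal (exp (\<sigma> * B t \<omega> - ?l * t)) \<le> ennreal (exp (?p * \<sigma> * B (real n) \<omega> - ?p * (?l - \<kappa>/4) * real n))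
      + ennreal (exp (- (?q * (\<kappa>/4)) * real n)) * ennreal (exp ((?q * \<sigma>) * \<bar>B (real n + (t - real n)) \<omega> - B (real n + 0) \<omega>\<bar>))"
    by (simp add: ennreal_mult[symmetric] ennreal_plus[symmetric] del: ennreal_plus)
  have cont: "continuous_on {0..1} (\<lambda>s. B (real n + s) \<omega>)"
  proof -
    have "continuous_on {0..1} (\<lambda>s. real n + s)" by (intro continuous_intros)
    moreover have "(\<lambda>s. real n + s) ` {0..1} \<subseteq> {0..}" by auto
    ultimately show ?thesis
      using continuous_on_compose2[OF std_BM_cont[OF BM \<omega>]] by blast
  qed
  have "ennreal (exp ((?q * \<sigma>) * \<bar>B (real n + (t - real n)) \<omega> - B (real n + 0) \<omega>\<bar>)) \<le> Wn B (?q * \<sigma>) (real n) \<omega>"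
    unfolding Wn_def
    by (rule chain_exp_bound[OF cont, where t="t - real n", of "?q * \<sigma>"]) (use t pq_facts[OF \<sigma> \<kappa>] \<sigma> in auto)
  then have "ennreal (exp (- (?q * (\<kappa>/4)) * real n)) * ennreal (exp ((?q * \<sigma>) * \<bar>B (real n + (t - real n)) \<omega> - B (real n + 0) \<omega>\<bar>))
      \<le> ennreal (exp (- (?q * (\<kappa>/4)) * real n)) * Wn B (?q * \<sigma>) (real n) \<omega>"
    by (rule mult_left_mono) simp
  with 1 show ?thesis unfolding Gn_def by (meson add_left_mono order_trans)
qed

lemma Gn_meas:
  assumes BM: "std_BM M B"
  shows "Gn B \<sigma> \<kappa> n \<in> borel_measurable M"
  unfolding Gn_def using std_BM_meas[OF BM] Wn_meas[OF BM] by measurable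

lemma Gtot_meas:
  assumes BM: "std_BM M B"
  shows "Gtot B \<sigma> \<kappa> \<in> borel_measurable M"
  unfolding Gtot_def using Gn_meas[OF BM] by measurable

lemma Gn_int:
  assumes BM: "std_BM M B" and \<sigma>: "0 < \<sigma>" and \<kappa>: "0 < \<kappa>"
  shows "(\<integral>\<^sup>+ \<omega>. Gn B \<sigma> \<kappa> (real n) \<omega> \<partial>M)
     \<le> ennreal (exp (- (pp \<sigma> \<kappa> * \<kappa> / 4) * real n) + exp (- (qq \<sigma> \<kappa> * (\<kappa>/4)) * real n) * (1 + 512 * exp (8 * (qq \<sigma> \<kappa> * \<sigma>)^2)))"
proof -
  interpret prob_space M using std_BM_prob[OF BM] .
  let ?p = "pp \<sigma> \<kappa>" and ?q = "qq \<sigma> \<kappa>" and ?l = "lam \<sigma> \<kappa>"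
  have e1: "(\<integral>\<^sup>+ \<omega>. ennreal (exp (?p * \<sigma> * B (real n) \<omega> - ?p * (?l - \<kappa>/4) * real n)) \<partial>M)
      = ennreal (exp (- (?p * \<kappa> / 4) * real n))"
  proof -
    have "(\<integral>\<^sup>+ \<omega>. ennreal (exp (?p * \<sigma> * B (real n) \<omega> - ?p * (?l - \<kappa>/4) * real n)) \<partial>M)
       = (\<integral>\<^sup>+ \<omega>. ennreal (exp (- ?p * (?l - \<kappa>/4) * real n)) * ennreal (exp ((?p * \<sigma>) * (B (real n) \<omega> - B 0 \<omega>))) \<partial>M)"
      by (intro nn_integral_cong) (simp add: std_BM_zero[OF BM] ennreal_mult[symmetric] exp_add[symmetric] algebra_simps)
    also have "\<dots> = ennreal (exp (- ?p * (?l - \<kappa>/4) * real n)) * (\<integral>\<^sup>+ \<omega>. ennreal (exp ((?p * \<sigma>) * (B (real n) \<omega> - B 0 \<omega>))) \<partial>M)"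
      using std_BM_meas[OF BM] by (intro nn_integral_cmult) measurable
    also have "(\<integral>\<^sup>+ \<omega>. ennreal (exp ((?p * \<sigma>) * (B (real n) \<omega> - B 0 \<omega>))) \<partial>M) = ennreal (exp ((?p * \<sigma>)^2 * (real n - 0) / 2))"
    proof (cases "n = 0")
      case True then show ?thesis by (simp add: emeasure_space_1)
    next
      case False then show ?thesis by (intro BM_mgf[OF BM]) auto
    qed
    also have "ennreal (exp (- ?p * (?l - \<kappa>/4) * real n)) * ennreal (exp ((?p * \<sigma>)^2 * (real n - 0) / 2))
        = ennreal (exp (- ?p * (?l - \<kappa>/4) * real n + (?p * \<sigma>)^2 * (real n - 0) / 2))"
      by (subst ennreal_mult[symmetric]) (simp_all add: exp_add[symmetric])
    also have "- ?p * (?l - \<kappa>/4) * real n + (?p * \<sigma>)^2 * (real n - 0) / 2 = - (?p * \<kappa> / 4) * real n"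
    proof -
      have h: "?p * \<sigma>^2 = \<kappa> + \<sigma>^2" unfolding pp_def using \<sigma> by (simp add: field_simps)
      have sq: "(?p * \<sigma>)^2 = ?p * (\<kappa> + \<sigma>^2)" unfolding h[symmetric] by (simp add: power2_eq_square)
      show ?thesis unfolding sq lam_def by (simp add: algebra_simps)
    qed
    finally show ?thesis .
  qed
  have "(\<integral>\<^sup>+ \<omega>. Gn B \<sigma> \<kappa> (real n) \<omega> \<partial>M) = ennreal (exp (- (?p * \<kappa> / 4) * real n))
      + ennreal (exp (- (?q * (\<kappa>/4)) * real n)) * (\<integral>\<^sup>+ \<omega>. Wn B (?q * \<sigma>) (real n) \<omega> \<partial>M)"
    unfolding Gn_def e1[symmetric] using std_BM_meas[OF BM] Wn_meas[OF BM]
    by (simp add: nn_integral_add nn_integral_cmult)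
  also have "\<dots> \<le> ennreal (exp (- (?p * \<kappa> / 4) * real n))
      + ennreal (exp (- (?q * (\<kappa>/4)) * real n)) * ennreal (1 + 512 * exp (8 * (?q * \<sigma>)^2))"
    using pq_facts[OF \<sigma> \<kappa>] \<sigma> by (intro add_left_mono mult_left_mono Wn_int[OF BM]) auto
  also have "\<dots> = ennreal (exp (- (?p * \<kappa> / 4) * real n) + exp (- (?q * (\<kappa>/4)) * real n) * (1 + 512 * exp (8 * (?q * \<sigma>)^2)))"
    by (simp add: ennreal_mult)
  finally show ?thesis .
qed

lemma Gtot_int:
  assumes BM: "std_BM M B" and \<sigma>: "0 < \<sigma>" and \<kappa>: "0 < \<kappa>"
  shows "(\<integral>\<^sup>+ \<omega>. Gtot B \<sigma> \<kappa> \<omega> \<partial>M) < \<infinity>"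
proof -
  let ?p = "pp \<sigma> \<kappa>" and ?q = "qq \<sigma> \<kappa>"
  define C where "C = 1 + 512 * exp (8 * (?q * \<sigma>)^2)"
  define f where "f = (\<lambda>n::nat. exp (- (?p * \<kappa> / 4) * real n) + exp (- (?q * (\<kappa>/4)) * real n) * C)"
  have geo: "summable (\<lambda>n::nat. exp (- c * real n))" if "c > 0" for c :: real
  proof -
    have "summable (\<lambda>n::nat. (exp (- c)) ^ n)" using that by (intro summable_geometric) simp
    then show ?thesis by (simp add: exp_of_nat_mult[symmetric] mult.commute)
  qed
  have p0: "?p * \<kappa> / 4 > 0" "?q * (\<kappa>/4) > 0" using pq_facts[OF \<sigma> \<kappa>] \<kappa> by auto
  have sf: "summable f" unfolding f_def
    by (intro summable_add summable_mult2 geo p0)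
  have f0: "0 \<le> f n" for n unfolding f_def C_def by simp
  have "(\<integral>\<^sup>+ \<omega>. Gtot B \<sigma> \<kappa> \<omega> \<partial>M) = (\<Sum>n. \<integral>\<^sup>+ \<omega>. Gn B \<sigma> \<kappa> (real n) \<omega> \<partial>M)"
    unfolding Gtot_def using Gn_meas[OF BM] by (simp add: nn_integral_suminf)
  also have "\<dots> \<le> (\<Sum>n. ennreal (f n))"
    unfolding f_def C_def by (intro suminf_le allI Gn_int[OF BM \<sigma> \<kappa>]) auto
  also have "\<dots> = ennreal (\<Sum>n. f n)" by (rule suminf_ennreal2[OF f0 sf])
  also have "\<dots> < \<infinity>" by simp
  finally show ?thesis .
qed



lemma grid_bounds:
  fixes t :: real assumes "0 \<le> t"
  shows "0 \<le> real (nat \<lfloor>2^k * t\<rfloor>) / 2^k" "real (nat \<lfloor>2^k * t\<rfloor>) / 2^k \<le> t"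
    "t < real (nat \<lfloor>2^k * t\<rfloor>) / 2^k + 1 / 2^k"
proof -
  have p: "(0::real) < 2^k" by simp
  have e: "real (nat \<lfloor>2^k * t\<rfloor>) = of_int \<lfloor>2^k * t\<rfloor>" using assms by simp
  show "0 \<le> real (nat \<lfloor>2^k * t\<rfloor>) / 2^k" by simp
  have "of_int \<lfloor>2^k * t\<rfloor> \<le> 2^k * t" by linarith
  then show "real (nat \<lfloor>2^k * t\<rfloor>) / 2^k \<le> t" unfolding e using p by (simp add: divide_le_eq mult.commute)
  have "2^k * t < of_int \<lfloor>2^k * t\<rfloor> + 1" by linarith
  then show "t < real (nat \<lfloor>2^k * t\<rfloor>) / 2^k + 1 / 2^k" unfolding e using p
    by (simp add: field_simps)
qed

lemma grid_lim:
  fixes t :: real assumes "0 \<le> t"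
  shows "(\<lambda>k. real (nat \<lfloor>2^k * t\<rfloor>) / 2^k) \<longlonglongrightarrow> t"
proof -
  have "(\<lambda>k. t - 1 / 2^k) \<longlonglongrightarrow> t - 0"
    by (intro tendsto_intros LIMSEQ_divide_realpow_zero) auto
  then have l: "(\<lambda>k. t - 1 / 2^k) \<longlonglongrightarrow> t" by simp
  have e1: "\<forall>\<^sub>F k in sequentially. t - 1 / 2^k \<le> real (nat \<lfloor>2^k * t\<rfloor>) / 2^k"
  proof (intro always_eventually allI)
    fix k :: nat show "t - 1 / 2^k \<le> real (nat \<lfloor>2^k * t\<rfloor>) / 2^k" using grid_bounds(3)[OF assms, of k] by linarith
  qed
  have e2: "\<forall>\<^sub>F k in sequentially. real (nat \<lfloor>2^k * t\<rfloor>) / 2^k \<le> t"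
    using grid_bounds(2)[OF assms] by (intro always_eventually allI) auto
  show ?thesis
    by (rule real_tendsto_sandwich[OF e1 e2 l tendsto_const])
qed

lemma joint_meas:
  fixes B :: "real \<Rightarrow> 'a \<Rightarrow> real"
  assumes meas: "\<And>t. B t \<in> borel_measurable N"
    and cont: "\<And>\<omega>. \<omega> \<in> space N \<Longrightarrow> continuous_on {0..} (\<lambda>t. B t \<omega>)"
  shows "(\<lambda>x. B (max (snd x) 0) (fst x)) \<in> borel_measurable (N \<Otimes>\<^sub>M lborel)"
proof (rule borel_measurable_LIMSEQ_metric[where f="\<lambda>k (x::'a\<times>real). B (real (nat \<lfloor>(2::real)^k * max (snd x) 0\<rfloor>) / 2^k) (fst x)"])
  fix k :: nat
  show "(\<lambda>x::'a\<times>real. B (real (nat \<lfloor>(2::real)^k * max (snd x) 0\<rfloor>) / 2^k) (fst x)) \<in> borel_measurable (N \<Otimes>\<^sub>M lborel)"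
    apply (rule measurable_compose_countable[where f="\<lambda>i x. B (real i / 2^k) (fst x)" and g="\<lambda>x::'a\<times>real. nat \<lfloor>(2::real)^k * max (snd x) 0\<rfloor>"])
    using meas apply measurable
    done
next
  fix x :: "'a \<times> real" assume x: "x \<in> space (N \<Otimes>\<^sub>M lborel)"
  then have w: "fst x \<in> space N" by (auto simp: space_pair_measure)
  let ?t = "max (snd x) 0"
  have t0: "0 \<le> ?t" by simp
  have "continuous (at ?t within {0..}) (\<lambda>t. B t (fst x))"
    using cont[OF w] t0 by (simp add: continuous_on_eq_continuous_within)
  moreover have "(\<lambda>k. real (nat \<lfloor>2^k * ?t\<rfloor>) / 2^k) \<longlonglongrightarrow> ?t" by (rule grid_lim[OF t0])
  moreover have "\<forall>k. real (nat \<lfloor>2^k * ?t\<rfloor>) / 2^k \<in> {0..}" by simp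
  ultimately show "(\<lambda>k. B (real (nat \<lfloor>2^k * ?t\<rfloor>) / 2^k) (fst x)) \<longlonglongrightarrow> B ?t (fst x)"
    by (simp add: continuous_within_sequentially comp_def)
qed

lemma aug_filt_sets:
  assumes BM: "std_BM M B"
  shows "sets (aug_filt M B t) = sigma_sets (space M) (nat_filt M B t \<union> null_subsets M)"
proof -
  have "nat_filt M B t \<union> null_subsets M \<subseteq> Pow (space M)"
    unfolding nat_filt_def null_subsets_def using sets.sets_into_space by (auto dest!: null_setsD2)
  then show ?thesis unfolding aug_filt_def by (simp add: sets_measure_of)
qed

lemma aug_filt_sub:
  assumes BM: "std_BM M B"
  shows "sets (aug_filt M B t) \<subseteq> sets (completion M)"
proof -
  have "nat_filt M B t \<union> null_subsets M \<subseteq> sets (completion M)"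
  proof
    fix A assume "A \<in> nat_filt M B t \<union> null_subsets M"
    then show "A \<in> sets (completion M)"
    proof
      assume "A \<in> nat_filt M B t"
      then obtain s C where "A = B s -` C \<inter> space M" "C \<in> sets borel" unfolding nat_filt_def by auto
      then have "A \<in> sets M" using std_BM_meas[OF BM, of s] by (auto simp: measurable_sets)
      then show ?thesis by auto
    next
      assume "A \<in> null_subsets M"
      then show ?thesis unfolding null_subsets_def by (auto intro: null_sets_completion)
    qed
  qed
  then have "sigma_sets (space (completion M)) (nat_filt M B t \<union> null_subsets M) \<subseteq> sets (completion M)"
    by (rule sets.sigma_sets_subset)
  then show ?thesis using aug_filt_sets[OF BM] by simp
qed

lemma stopping_meas:
  assumes BM: "std_BM M B" and st: "BM_stopping_time M B \<tau>"
  shows "\<tau> \<in> borel_measurable (completion M)"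
proof (rule borel_measurableI_le)
  fix y :: ennreal
  show "{x \<in> space (completion M). \<tau> x \<le> y} \<in> sets (completion M)"
  proof (cases "y = \<top>")
    case True then show ?thesis by simp
  next
    case False
    then obtain t where t: "y = ennreal t" "0 \<le> t" by (cases y) auto
    then have "{x \<in> space M. \<tau> x \<le> ennreal t} \<in> sets (aug_filt M B t)"
      using st unfolding BM_stopping_time_def by blast
    then show ?thesis using aug_filt_sub[OF BM, of t] t by auto
  qed
qed



definition R1 :: "(real \<Rightarrow> 'a \<Rightarrow> real) \<Rightarrow> real \<Rightarrow> real \<Rightarrow> real \<Rightarrow> real \<Rightarrow> real \<Rightarrow> real \<Rightarrow> real \<Rightarrow> real
     \<Rightarrow> ('a \<Rightarrow> ennreal) \<Rightarrow> 'a \<Rightarrow> real" where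
  "R1 B \<theta> \<alpha> \<sigma> \<rho> \<nu> \<rho>h \<mu>h \<mu> \<tau> \<omega> =
     (LINT t:{t. 0 \<le> t \<and> ennreal t < \<tau> \<omega>}|lborel. exp (-(\<rho> + \<mu>) * t) * (\<alpha> + \<nu> * \<mu>) * GBM B \<theta> \<alpha> \<sigma> 1 t \<omega>)
     + (if \<tau> \<omega> = \<infinity> then 0
        else exp (-(\<rho> + \<mu>) * enn2real (\<tau> \<omega>)) * fhat \<rho> \<rho>h \<mu>h \<mu> * GBM B \<theta> \<alpha> \<sigma> 1 (enn2real (\<tau> \<omega>)) \<omega>)"

definition R0 :: "real \<Rightarrow> real \<Rightarrow> real \<Rightarrow> real \<Rightarrow> real \<Rightarrow> ('a \<Rightarrow> ennreal) \<Rightarrow> 'a \<Rightarrow> real" where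
  "R0 \<rho> K \<rho>h \<mu>h \<mu> \<tau> \<omega> = (if \<tau> \<omega> = \<infinity> then 0 else exp (-(\<rho> + \<mu>) * enn2real (\<tau> \<omega>)) * fhat \<rho> \<rho>h \<mu>h \<mu> * (- K))"

lemma GBM_scale: "GBM B \<theta> \<alpha> \<sigma> x t \<omega> = x * GBM B \<theta> \<alpha> \<sigma> 1 t \<omega>"
  unfolding GBM_def by simp

lemma reward_decomp:
  "reward B \<theta> \<alpha> \<sigma> \<rho> \<nu> K \<rho>h \<mu>h x \<mu> \<tau> \<omega> = x * R1 B \<theta> \<alpha> \<sigma> \<rho> \<nu> \<rho>h \<mu>h \<mu> \<tau> \<omega> + R0 \<rho> K \<rho>h \<mu>h \<mu> \<tau> \<omega>"
proof -
  have "(LINT t:{t. 0 \<le> t \<and> ennreal t < \<tau> \<omega>}|lborel. exp (-(\<rho> + \<mu>) * t) * (\<alpha> + \<nu> * \<mu>) * GBM B \<theta> \<alpha> \<sigma> x t \<omega>)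
      = x * (LINT t:{t. 0 \<le> t \<and> ennreal t < \<tau> \<omega>}|lborel. exp (-(\<rho> + \<mu>) * t) * (\<alpha> + \<nu> * \<mu>) * GBM B \<theta> \<alpha> \<sigma> 1 t \<omega>)"
    unfolding set_lebesgue_integral_def
    by (subst integral_mult_right_zero[symmetric]) (simp add: GBM_scale[of B \<theta> \<alpha> \<sigma> x] ac_simps)
  then show ?thesis
    unfolding reward_def R1_def R0_def by (simp add: GBM_scale[of B \<theta> \<alpha> \<sigma> x] algebra_simps)
qed

lemma R1_meas:
  assumes BM: "std_BM M B" and \<tau>[measurable]: "\<tau> \<in> borel_measurable (completion M)"
  shows "R1 B \<theta> \<alpha> \<sigma> \<rho> \<nu> \<rho>h \<mu>h \<mu> \<tau> \<in> borel_measurable (completion M)"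
proof -
  have jm[measurable]: "(\<lambda>x. B (max (snd x) 0) (fst x)) \<in> borel_measurable (completion M \<Otimes>\<^sub>M lborel)"
    by (rule joint_meas) (use std_BM_meas[OF BM] std_BM_cont[OF BM] in \<open>auto intro: measurable_completion\<close>)
  have jm2: "(\<lambda>\<omega>. B (max (enn2real (\<tau> \<omega>)) 0) \<omega>) \<in> borel_measurable (completion M)"
  proof -
    have "(\<lambda>\<omega>. (\<omega>, enn2real (\<tau> \<omega>))) \<in> completion M \<rightarrow>\<^sub>M completion M \<Otimes>\<^sub>M lborel" by measurable
    from measurable_compose[OF this jm] show ?thesis by simp
  qed
  define c where "c = \<theta> - \<alpha> - \<sigma>\<^sup>2 / 2"
  let ?F = "\<lambda>\<omega> t. (if 0 \<le> t \<and> ennreal t < \<tau> \<omega> then exp (-(\<rho> + \<mu>) * t) * (\<alpha> + \<nu> * \<mu>) * exp (c * t + \<sigma> * B (max t 0) \<omega>) else 0)"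
  have eq: "R1 B \<theta> \<alpha> \<sigma> \<rho> \<nu> \<rho>h \<mu>h \<mu> \<tau> \<omega> = (\<integral>t. ?F \<omega> t \<partial>lborel)
     + (if \<tau> \<omega> = \<infinity> then 0
        else exp (-(\<rho> + \<mu>) * enn2real (\<tau> \<omega>)) * fhat \<rho> \<rho>h \<mu>h \<mu> * exp (c * enn2real (\<tau> \<omega>) + \<sigma> * B (max (enn2real (\<tau> \<omega>)) 0) \<omega>))" for \<omega>
  proof -
    have i: "(LINT t:{t. 0 \<le> t \<and> ennreal t < \<tau> \<omega>}|lborel. exp (-(\<rho> + \<mu>) * t) * (\<alpha> + \<nu> * \<mu>) * GBM B \<theta> \<alpha> \<sigma> 1 t \<omega>) = (\<integral>t. ?F \<omega> t \<partial>lborel)"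
      unfolding set_lebesgue_integral_def GBM_def c_def
      by (rule Bochner_Integration.integral_cong) (auto simp: indicator_def max_def)
    have m: "max (enn2real (\<tau> \<omega>)) 0 = enn2real (\<tau> \<omega>)" by (simp add: max_absorb1)
    show ?thesis unfolding R1_def i m by (simp add: GBM_def c_def)
  qed
  have m1: "(\<lambda>\<omega>. \<integral>t. ?F \<omega> t \<partial>lborel) \<in> borel_measurable (completion M)"
    by (rule lborel.borel_measurable_lebesgue_integral) measurable
  show ?thesis unfolding eq using m1 jm2 by measurable
qed

lemma R1_nonneg:
  assumes "0 \<le> \<alpha> + \<nu> * \<mu>" "0 \<le> fhat \<rho> \<rho>h \<mu>h \<mu>"
  shows "0 \<le> R1 B \<theta> \<alpha> \<sigma> \<rho> \<nu> \<rho>h \<mu>h \<mu> \<tau> \<omega>"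
  unfolding R1_def set_lebesgue_integral_def GBM_def using assms
  by (intro add_nonneg_nonneg integral_nonneg) (auto simp: indicator_def)



lemma ennreal_set_integral_le:
  fixes f :: "real \<Rightarrow> real"
  assumes "\<And>t. t \<in> S \<Longrightarrow> 0 \<le> f t"
  shows "ennreal (LINT t:S|lborel. f t) \<le> (\<integral>\<^sup>+ t. indicator S t * ennreal (f t) \<partial>lborel)"
proof (cases "integrable lborel (\<lambda>t. indicator S t *\<^sub>R f t)")
  case True
  have "ennreal (LINT t:S|lborel. f t) = (\<integral>\<^sup>+ t. ennreal (indicator S t *\<^sub>R f t) \<partial>lborel)"
    unfolding set_lebesgue_integral_def
    by (rule nn_integral_eq_integral[OF True, symmetric]) (use assms in \<open>auto simp: indicator_def\<close>)
  also have "\<dots> = (\<integral>\<^sup>+ t. indicator S t * ennreal (f t) \<partial>lborel)"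
    by (intro nn_integral_cong) (auto simp: indicator_def)
  finally show ?thesis by simp
next
  case False
  then show ?thesis unfolding set_lebesgue_integral_def by (simp add: not_integrable_integral_eq)
qed

lemma Gn_le_Gtot: "Gn B \<sigma> \<kappa> (real m) \<omega> \<le> Gtot B \<sigma> \<kappa> \<omega>"
proof -
  have "(\<Sum>n\<in>{m}. Gn B \<sigma> \<kappa> (real n) \<omega>) \<le> (\<Sum>n. Gn B \<sigma> \<kappa> (real n) \<omega>)"
    by (rule sum_le_suminf) auto
  then show ?thesis unfolding Gtot_def by simp
qed

lemma disc_le:
  assumes "\<kappa> + \<theta> - \<alpha> \<le> \<rho> + \<mu>" "0 \<le> t"
  shows "exp (-(\<rho> + \<mu>) * t) * GBM B \<theta> \<alpha> \<sigma> 1 t \<omega> \<le> exp (\<sigma> * B t \<omega> - lam \<sigma> \<kappa> * t)"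
proof -
  have "(\<theta> - \<alpha> - \<sigma>\<^sup>2/2 - (\<rho> + \<mu>)) * t \<le> (- lam \<sigma> \<kappa>) * t"
    using assms unfolding lam_def by (intro mult_right_mono) auto
  then show ?thesis unfolding GBM_def by (simp add: exp_add[symmetric] algebra_simps)
qed

lemma Y_le_Gtot:
  assumes BM: "std_BM M B" and \<sigma>: "0 < \<sigma>" and \<kappa>: "0 < \<kappa>" and \<omega>: "\<omega> \<in> space M" and t: "0 \<le> t"
  shows "ennreal (exp (\<sigma> * B t \<omega> - lam \<sigma> \<kappa> * t)) \<le> Gn B \<sigma> \<kappa> (real (nat \<lfloor>t\<rfloor>)) \<omega>"
proof -
  have e: "real (nat \<lfloor>t\<rfloor>) = of_int \<lfloor>t\<rfloor>" using t by simp
  have "of_int \<lfloor>t\<rfloor> \<le> t" "t < of_int \<lfloor>t\<rfloor> + 1" by linarith+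
  then show ?thesis by (intro Gn_pointwise[OF BM \<sigma> \<kappa> \<omega>]) (simp_all add: e)
qed

lemma R1_bound:
  assumes BM: "std_BM M B" and \<sigma>: "0 < \<sigma>" and \<kappa>: "0 < \<kappa>" and \<omega>: "\<omega> \<in> space M"
    and c: "\<kappa> + \<theta> - \<alpha> \<le> \<rho> + \<mu>" and a0: "0 \<le> \<alpha> + \<nu> * \<mu>" and f0: "0 \<le> fhat \<rho> \<rho>h \<mu>h \<mu>"
  shows "ennreal (R1 B \<theta> \<alpha> \<sigma> \<rho> \<nu> \<rho>h \<mu>h \<mu> \<tau> \<omega>) \<le> ennreal ((\<alpha> + \<nu> * \<mu>) + fhat \<rho> \<rho>h \<mu>h \<mu>) * Gtot B \<sigma> \<kappa> \<omega>"
proof -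
  let ?a = "\<alpha> + \<nu> * \<mu>" and ?f = "fhat \<rho> \<rho>h \<mu>h \<mu>"
  let ?S = "{t. 0 \<le> t \<and> ennreal t < \<tau> \<omega>}"
  let ?h = "\<lambda>t. exp (-(\<rho> + \<mu>) * t) * ?a * GBM B \<theta> \<alpha> \<sigma> 1 t \<omega>"
  define I where "I = (LINT t:?S|lborel. ?h t)"
  define T where "T = (if \<tau> \<omega> = \<infinity> then 0 else exp (-(\<rho> + \<mu>) * enn2real (\<tau> \<omega>)) * ?f * GBM B \<theta> \<alpha> \<sigma> 1 (enn2real (\<tau> \<omega>)) \<omega>)"
  have h0: "0 \<le> ?h t" for t using a0 unfolding GBM_def by simp
  have I0: "0 \<le> I" unfolding I_def set_lebesgue_integral_def using h0 by (intro Bochner_Integration.integral_nonneg) (auto simp: indicator_def)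
  have T0: "0 \<le> T" unfolding T_def GBM_def using f0 by simp
  have "ennreal I \<le> (\<integral>\<^sup>+ t. indicator ?S t * ennreal (?h t) \<partial>lborel)"
    unfolding I_def by (rule ennreal_set_integral_le) (use h0 in auto)
  also have "\<dots> \<le> (\<integral>\<^sup>+ t. (\<Sum>n. ennreal ?a * Gn B \<sigma> \<kappa> (real n) \<omega> * indicator {real n..<real n + 1} t) \<partial>lborel)"
  proof (intro nn_integral_mono)
    fix t
    show "indicator ?S t * ennreal (?h t) \<le> (\<Sum>n. ennreal ?a * Gn B \<sigma> \<kappa> (real n) \<omega> * indicator {real n..<real n + 1} t)"
    proof (cases "t \<in> ?S")
      case False then show ?thesis by simp
    next
      case True
      then have t0: "0 \<le> t" by simp
      let ?m = "nat \<lfloor>t\<rfloor>"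
      have mt: "t \<in> {real ?m..<real ?m + 1}"
      proof -
        have e: "real ?m = of_int \<lfloor>t\<rfloor>" using t0 by simp
        have "of_int \<lfloor>t\<rfloor> \<le> t" "t < of_int \<lfloor>t\<rfloor> + 1" by linarith+
        then show ?thesis unfolding e by simp
      qed
      have "ennreal (?h t) = ennreal ?a * ennreal (exp (-(\<rho> + \<mu>) * t) * GBM B \<theta> \<alpha> \<sigma> 1 t \<omega>)"
        using a0 by (simp add: ennreal_mult[symmetric] GBM_def ac_simps)
      also have "\<dots> \<le> ennreal ?a * ennreal (exp (\<sigma> * B t \<omega> - lam \<sigma> \<kappa> * t))"
        by (intro mult_left_mono ennreal_leI disc_le[OF c t0]) simp
      also have "\<dots> \<le> ennreal ?a * Gn B \<sigma> \<kappa> (real ?m) \<omega>"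
        by (intro mult_left_mono Y_le_Gtot[OF BM \<sigma> \<kappa> \<omega> t0]) simp
      also have "\<dots> = (\<Sum>n\<in>{?m}. ennreal ?a * Gn B \<sigma> \<kappa> (real n) \<omega> * indicator {real n..<real n + 1} t)"
        using mt by simp
      also have "\<dots> \<le> (\<Sum>n. ennreal ?a * Gn B \<sigma> \<kappa> (real n) \<omega> * indicator {real n..<real n + 1} t)"
        by (rule sum_le_suminf) auto
      finally show ?thesis using True by simp
    qed
  qed
  also have "\<dots> = (\<Sum>n. \<integral>\<^sup>+ t. ennreal ?a * Gn B \<sigma> \<kappa> (real n) \<omega> * indicator {real n..<real n + 1} t \<partial>lborel)"
    by (rule nn_integral_suminf) simp
  also have "\<dots> = (\<Sum>n. ennreal ?a * Gn B \<sigma> \<kappa> (real n) \<omega>)"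
    by (subst nn_integral_cmult_indicator) auto
  also have "\<dots> = ennreal ?a * Gtot B \<sigma> \<kappa> \<omega>"
    unfolding Gtot_def by (rule ennreal_suminf_cmult)
  finally have 1: "ennreal I \<le> ennreal ?a * Gtot B \<sigma> \<kappa> \<omega>" .
  have 2: "ennreal T \<le> ennreal ?f * Gtot B \<sigma> \<kappa> \<omega>"
  proof (cases "\<tau> \<omega> = \<infinity>")
    case True then show ?thesis unfolding T_def by simp
  next
    case False
    let ?t = "enn2real (\<tau> \<omega>)"
    have t0: "0 \<le> ?t" by simp
    have "ennreal T = ennreal ?f * ennreal (exp (-(\<rho> + \<mu>) * ?t) * GBM B \<theta> \<alpha> \<sigma> 1 ?t \<omega>)"
      unfolding T_def using False f0 by (simp add: ennreal_mult[symmetric] GBM_def ac_simps)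
    also have "\<dots> \<le> ennreal ?f * ennreal (exp (\<sigma> * B ?t \<omega> - lam \<sigma> \<kappa> * ?t))"
      by (intro mult_left_mono ennreal_leI disc_le[OF c t0]) simp
    also have "\<dots> \<le> ennreal ?f * Gn B \<sigma> \<kappa> (real (nat \<lfloor>?t\<rfloor>)) \<omega>"
      by (intro mult_left_mono Y_le_Gtot[OF BM \<sigma> \<kappa> \<omega> t0]) simp
    also have "\<dots> \<le> ennreal ?f * Gtot B \<sigma> \<kappa> \<omega>"
      by (intro mult_left_mono Gn_le_Gtot) simp
    finally show ?thesis .
  qed
  have "ennreal (R1 B \<theta> \<alpha> \<sigma> \<rho> \<nu> \<rho>h \<mu>h \<mu> \<tau> \<omega>) = ennreal I + ennreal T"
    unfolding R1_def I_def[symmetric] T_def[symmetric] using I0 T0 by simp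
  also have "\<dots> \<le> ennreal ?a * Gtot B \<sigma> \<kappa> \<omega> + ennreal ?f * Gtot B \<sigma> \<kappa> \<omega>"
    using 1 2 by (rule add_mono)
  also have "\<dots> = ennreal (?a + ?f) * Gtot B \<sigma> \<kappa> \<omega>"
    using a0 f0 by (simp add: distrib_right)
  finally show ?thesis .
qed



lemma R1_int:
  assumes BM: "std_BM M B" and \<sigma>: "0 < \<sigma>" and \<kappa>: "0 < \<kappa>" and \<tau>: "\<tau> \<in> borel_measurable (completion M)"
    and c: "\<kappa> + \<theta> - \<alpha> \<le> \<rho> + \<mu>" and a0: "0 \<le> \<alpha> + \<nu> * \<mu>" and f0: "0 \<le> fhat \<rho> \<rho>h \<mu>h \<mu>"
  shows "integrable (completion M) (R1 B \<theta> \<alpha> \<sigma> \<rho> \<nu> \<rho>h \<mu>h \<mu> \<tau>)"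
    "integral\<^sup>L (completion M) (R1 B \<theta> \<alpha> \<sigma> \<rho> \<nu> \<rho>h \<mu>h \<mu> \<tau>)
       \<le> ((\<alpha> + \<nu> * \<mu>) + fhat \<rho> \<rho>h \<mu>h \<mu>) * enn2real (\<integral>\<^sup>+ \<omega>. Gtot B \<sigma> \<kappa> \<omega> \<partial>M)"
proof -
  let ?R = "R1 B \<theta> \<alpha> \<sigma> \<rho> \<nu> \<rho>h \<mu>h \<mu> \<tau>" and ?k = "(\<alpha> + \<nu> * \<mu>) + fhat \<rho> \<rho>h \<mu>h \<mu>"
  have m: "?R \<in> borel_measurable (completion M)" by (rule R1_meas[OF BM \<tau>])
  have mG: "Gtot B \<sigma> \<kappa> \<in> borel_measurable (completion M)" by (rule measurable_completion[OF Gtot_meas[OF BM]])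
  have "(\<integral>\<^sup>+ \<omega>. ennreal (?R \<omega>) \<partial>completion M) \<le> (\<integral>\<^sup>+ \<omega>. ennreal ?k * Gtot B \<sigma> \<kappa> \<omega> \<partial>completion M)"
    by (intro nn_integral_mono R1_bound[OF BM \<sigma> \<kappa> _ c a0 f0]) simp
  also have "\<dots> = ennreal ?k * (\<integral>\<^sup>+ \<omega>. Gtot B \<sigma> \<kappa> \<omega> \<partial>M)"
    using mG Gtot_meas[OF BM] by (simp add: nn_integral_cmult nn_integral_completion)
  finally have le: "(\<integral>\<^sup>+ \<omega>. ennreal (?R \<omega>) \<partial>completion M) \<le> ennreal ?k * (\<integral>\<^sup>+ \<omega>. Gtot B \<sigma> \<kappa> \<omega> \<partial>M)" .
  have fin: "ennreal ?k * (\<integral>\<^sup>+ \<omega>. Gtot B \<sigma> \<kappa> \<omega> \<partial>M) < top"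
    using Gtot_int[OF BM \<sigma> \<kappa>] by (simp add: ennreal_mult_less_top)
  have nn: "AE \<omega> in completion M. 0 \<le> ?R \<omega>" by (rule AE_I2) (rule R1_nonneg[OF a0 f0])
  show "integrable (completion M) ?R"
    by (rule integrableI_nonneg[OF m nn]) (use le fin in auto)
  have "integral\<^sup>L (completion M) ?R = enn2real (\<integral>\<^sup>+ \<omega>. ennreal (?R \<omega>) \<partial>completion M)"
    by (rule integral_eq_nn_integral[OF m nn])
  also have "\<dots> \<le> enn2real (ennreal ?k * (\<integral>\<^sup>+ \<omega>. Gtot B \<sigma> \<kappa> \<omega> \<partial>M))"
    by (rule enn2real_mono[OF le fin])
  also have "\<dots> = ?k * enn2real (\<integral>\<^sup>+ \<omega>. Gtot B \<sigma> \<kappa> \<omega> \<partial>M)"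
  proof -
    have "0 \<le> ?k" using a0 f0 by simp
    then show ?thesis by (simp only: enn2real_mult enn2real_ennreal)
  qed
  finally show "integral\<^sup>L (completion M) ?R \<le> ?k * enn2real (\<integral>\<^sup>+ \<omega>. Gtot B \<sigma> \<kappa> \<omega> \<partial>M)" .
qed

lemma R0_int:
  assumes BM: "std_BM M B" and \<tau>: "\<tau> \<in> borel_measurable (completion M)"
    and c: "0 < \<rho> + \<mu>" and f0: "0 \<le> fhat \<rho> \<rho>h \<mu>h \<mu>"
  shows "integrable (completion M) (R0 \<rho> K \<rho>h \<mu>h \<mu> \<tau>)"
    "integral\<^sup>L (completion M) (R0 \<rho> K \<rho>h \<mu>h \<mu> \<tau>) \<le> fhat \<rho> \<rho>h \<mu>h \<mu> * \<bar>K\<bar>"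
proof -
  interpret P: prob_space M using std_BM_prob[OF BM] .
  interpret prob_space "completion M" by (rule P.prob_space_completion)
  have m: "R0 \<rho> K \<rho>h \<mu>h \<mu> \<tau> \<in> borel_measurable (completion M)"
    unfolding R0_def using \<tau> by measurable
  have b: "\<bar>R0 \<rho> K \<rho>h \<mu>h \<mu> \<tau> \<omega>\<bar> \<le> fhat \<rho> \<rho>h \<mu>h \<mu> * \<bar>K\<bar>" for \<omega>
  proof (cases "\<tau> \<omega> = \<infinity>")
    case True then show ?thesis unfolding R0_def using f0 by simp
  next
    case False
    have "-(\<rho> + \<mu>) * enn2real (\<tau> \<omega>) \<le> 0" using c by (intro mult_nonpos_nonneg) auto
    then have "exp (-(\<rho> + \<mu>) * enn2real (\<tau> \<omega>)) \<le> 1" by simp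
    then have "exp (-(\<rho> + \<mu>) * enn2real (\<tau> \<omega>)) * (fhat \<rho> \<rho>h \<mu>h \<mu> * \<bar>K\<bar>) \<le> 1 * (fhat \<rho> \<rho>h \<mu>h \<mu> * \<bar>K\<bar>)"
      using f0 by (intro mult_right_mono) auto
    then show ?thesis unfolding R0_def using False f0 by (simp add: abs_mult ac_simps)
  qed
  show int: "integrable (completion M) (R0 \<rho> K \<rho>h \<mu>h \<mu> \<tau>)"
    by (rule integrable_const_bound[where B="fhat \<rho> \<rho>h \<mu>h \<mu> * \<bar>K\<bar>"]) (use b m in auto)
  show "integral\<^sup>L (completion M) (R0 \<rho> K \<rho>h \<mu>h \<mu> \<tau>) \<le> fhat \<rho> \<rho>h \<mu>h \<mu> * \<bar>K\<bar>"
    by (rule integral_le_const[OF int]) (use b in \<open>auto intro: abs_le_D1\<close>)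
qed



lemma reward_integral:
  assumes BM: "std_BM M B" and \<sigma>: "0 < \<sigma>" and \<kappa>: "0 < \<kappa>" and \<tau>: "\<tau> \<in> borel_measurable (completion M)"
    and c: "\<kappa> + \<theta> - \<alpha> \<le> \<rho> + \<mu>" and c0: "0 < \<rho> + \<mu>" and a0: "0 \<le> \<alpha> + \<nu> * \<mu>" and f0: "0 \<le> fhat \<rho> \<rho>h \<mu>h \<mu>"
  shows "integrable (completion M) (reward B \<theta> \<alpha> \<sigma> \<rho> \<nu> K \<rho>h \<mu>h x \<mu> \<tau>)"
    "integral\<^sup>L (completion M) (reward B \<theta> \<alpha> \<sigma> \<rho> \<nu> K \<rho>h \<mu>h x \<mu> \<tau>)
      = x * integral\<^sup>L (completion M) (R1 B \<theta> \<alpha> \<sigma> \<rho> \<nu> \<rho>h \<mu>h \<mu> \<tau>) + integral\<^sup>L (completion M) (R0 \<rho> K \<rho>h \<mu>h \<mu> \<tau>)"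
proof -
  have eq: "reward B \<theta> \<alpha> \<sigma> \<rho> \<nu> K \<rho>h \<mu>h x \<mu> \<tau> = (\<lambda>\<omega>. x * R1 B \<theta> \<alpha> \<sigma> \<rho> \<nu> \<rho>h \<mu>h \<mu> \<tau> \<omega> + R0 \<rho> K \<rho>h \<mu>h \<mu> \<tau> \<omega>)"
    by (rule ext) (rule reward_decomp)
  note i1 = R1_int(1)[OF BM \<sigma> \<kappa> \<tau> c a0 f0]
  note i0 = R0_int(1)[OF BM \<tau> c0 f0, of K]
  show "integrable (completion M) (reward B \<theta> \<alpha> \<sigma> \<rho> \<nu> K \<rho>h \<mu>h x \<mu> \<tau>)"
    unfolding eq using i1 i0 by simp
  show "integral\<^sup>L (completion M) (reward B \<theta> \<alpha> \<sigma> \<rho> \<nu> K \<rho>h \<mu>h x \<mu> \<tau>)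
      = x * integral\<^sup>L (completion M) (R1 B \<theta> \<alpha> \<sigma> \<rho> \<nu> \<rho>h \<mu>h \<mu> \<tau>) + integral\<^sup>L (completion M) (R0 \<rho> K \<rho>h \<mu>h \<mu> \<tau>)"
    unfolding eq using i1 i0 by simp
qed

lemma tau_pos_st:
  assumes BM: "std_BM M B"
  shows "BM_stopping_time M B (\<lambda>\<omega>. if z < B 1 \<omega> then 1 else \<top>)"
  unfolding BM_stopping_time_def
proof (intro allI impI)
  fix t :: real assume t: "0 \<le> t"
  show "{\<omega> \<in> space M. (if z < B 1 \<omega> then 1 else \<top>) \<le> ennreal t} \<in> sets (aug_filt M B t)"
  proof (cases "1 \<le> t")
    case True
    have "{\<omega> \<in> space M. (if z < B 1 \<omega> then 1 else \<top>) \<le> ennreal t} = B 1 -` {z<..} \<inter> space M"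
      using True by (auto simp: top_unique)
    also have "\<dots> \<in> nat_filt M B t" unfolding nat_filt_def using True
      by (intro UN_I[of 1]) (auto intro!: exI[of _ "{z<..}"])
    finally show ?thesis unfolding aug_filt_sets[OF BM] by (auto intro: sigma_sets.Basic)
  next
    case False
    have e: "{\<omega> \<in> space M. (if z < B 1 \<omega> then 1 else \<top>) \<le> ennreal t} = {}"
      using False t by (auto simp: top_unique)
    show ?thesis unfolding e by simp
  qed
qed

lemma prob_pos:
  assumes BM: "std_BM M B"
  shows "0 < emeasure M {\<omega> \<in> space M. z < B 1 \<omega>}"
proof -
  have d: "distributed M lborel (\<lambda>\<omega>. B 1 \<omega> - B 0 \<omega>) (\<lambda>x. ennreal (normal_density 0 (sqrt (1 - 0)) x))"
    by (rule std_BM_inc[OF BM]) auto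
  have "emeasure M ((\<lambda>\<omega>. B 1 \<omega> - B 0 \<omega>) -` {z<..} \<inter> space M)
      = (\<integral>\<^sup>+ x. ennreal (normal_density 0 (sqrt (1 - 0)) x) * indicator {z<..} x \<partial>lborel)"
    by (rule distributed_emeasure[OF d]) simp
  moreover have "(\<lambda>\<omega>. B 1 \<omega> - B 0 \<omega>) -` {z<..} \<inter> space M = {\<omega> \<in> space M. z < B 1 \<omega>}"
    using std_BM_zero[OF BM] by auto
  moreover have "(\<integral>\<^sup>+ x. ennreal (normal_density 0 (sqrt (1 - 0)) x) * indicator {z<..} x \<partial>lborel) \<noteq> 0"
  proof
    assume "(\<integral>\<^sup>+ x. ennreal (normal_density 0 (sqrt (1 - 0)) x) * indicator {z<..} x \<partial>lborel) = 0"
    then have "AE x in lborel. ennreal (normal_density 0 (sqrt (1 - 0)) x) * indicator {z<..} x = 0"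
      by (subst (asm) nn_integral_0_iff_AE) auto
    then have "AE x in lborel. x \<notin> {z<..<z+1}"
    proof -
      have pos: "normal_density 0 1 x \<noteq> 0" for x
      proof -
        have "0 < normal_density 0 1 x" by (rule normal_density_pos) simp
        then show ?thesis by simp
      qed
      from \<open>AE x in lborel. _\<close> show ?thesis by eventually_elim (auto simp: indicator_def pos split: if_splits)
    qed
    then have "emeasure lborel {z<..<z+1} = 0"
      by (subst (asm) AE_iff_measurable[where N="{z<..<z+1}"]) auto
    then show False by simp
  qed
  ultimately show ?thesis by (simp add: zero_less_iff_neq_zero)
qed



lemma LINT_nonneg:
  fixes f :: "real \<Rightarrow> real"
  assumes "\<And>t. t \<in> S \<Longrightarrow> 0 \<le> f t"
  shows "0 \<le> (LINT t:S|lborel. f t)"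
  unfolding set_lebesgue_integral_def using assms
  by (intro Bochner_Integration.integral_nonneg) (auto simp: indicator_def)

lemma reward_pos:
  assumes BM: "std_BM M B" and \<sigma>: "0 < \<sigma>" and \<kappa>: "0 < \<kappa>"
    and c: "\<kappa> + \<theta> - \<alpha> \<le> \<rho> + \<mu>" and c0: "0 < \<rho> + \<mu>" and a0: "0 \<le> \<alpha> + \<nu> * \<mu>" and fpos: "0 < fhat \<rho> \<rho>h \<mu>h \<mu>"
    and x: "0 < x"
  shows "0 < integral\<^sup>L (completion M) (reward B \<theta> \<alpha> \<sigma> \<rho> \<nu> K \<rho>h \<mu>h x \<mu>
            (\<lambda>\<omega>. if (ln ((\<bar>K\<bar> + 1) / x) - (\<theta> - \<alpha> - \<sigma>\<^sup>2 / 2)) / \<sigma> < B 1 \<omega> then 1 else \<top>))"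
proof -
  define z where "z = (ln ((\<bar>K\<bar> + 1) / x) - (\<theta> - \<alpha> - \<sigma>\<^sup>2 / 2)) / \<sigma>"
  define \<tau> :: "'a \<Rightarrow> ennreal" where "\<tau> = (\<lambda>\<omega>. if z < B 1 \<omega> then 1 else \<top>)"
  let ?r = "reward B \<theta> \<alpha> \<sigma> \<rho> \<nu> K \<rho>h \<mu>h x \<mu> \<tau>"
  have f0: "0 \<le> fhat \<rho> \<rho>h \<mu>h \<mu>" using fpos by simp
  have \<tau>m: "\<tau> \<in> borel_measurable (completion M)"
    unfolding \<tau>_def by (rule stopping_meas[OF BM tau_pos_st[OF BM]])
  have int: "integrable (completion M) ?r" by (rule reward_integral(1)[OF BM \<sigma> \<kappa> \<tau>m c c0 a0 f0])
  have L0: "0 \<le> (LINT t:{t. 0 \<le> t \<and> ennreal t < \<tau> \<omega>}|lborel. exp (-(\<rho> + \<mu>) * t) * (\<alpha> + \<nu> * \<mu>) * GBM B \<theta> \<alpha> \<sigma> x t \<omega>)" for \<omega>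
    by (rule LINT_nonneg) (use a0 x in \<open>auto simp: GBM_def\<close>)
  have big: "K < GBM B \<theta> \<alpha> \<sigma> x 1 \<omega>" if "z < B 1 \<omega>" for \<omega>
  proof -
    have "ln ((\<bar>K\<bar> + 1) / x) < (\<theta> - \<alpha> - \<sigma>\<^sup>2 / 2) * 1 + \<sigma> * B 1 \<omega>"
      using that \<sigma> unfolding z_def by (simp add: divide_less_eq algebra_simps)
    moreover have "0 < (\<bar>K\<bar> + 1) / x" using x by simp
    ultimately have "exp (ln ((\<bar>K\<bar> + 1) / x)) < exp ((\<theta> - \<alpha> - \<sigma>\<^sup>2 / 2) * 1 + \<sigma> * B 1 \<omega>)"
      by (intro exp_less_mono) simp
    then have "(\<bar>K\<bar> + 1) / x < exp ((\<theta> - \<alpha> - \<sigma>\<^sup>2 / 2) * 1 + \<sigma> * B 1 \<omega>)"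
      using exp_ln[OF \<open>0 < (\<bar>K\<bar> + 1) / x\<close>] by simp
    then have "\<bar>K\<bar> + 1 < x * exp ((\<theta> - \<alpha> - \<sigma>\<^sup>2 / 2) * 1 + \<sigma> * B 1 \<omega>)"
      using x by (simp add: divide_less_eq mult.commute)
    then show ?thesis unfolding GBM_def by linarith
  qed
  have trm: "0 \<le> (if \<tau> \<omega> = \<infinity> then 0 else exp (-(\<rho> + \<mu>) * enn2real (\<tau> \<omega>)) * fhat \<rho> \<rho>h \<mu>h \<mu> * (GBM B \<theta> \<alpha> \<sigma> x (enn2real (\<tau> \<omega>)) \<omega> - K))"
    and termpos: "z < B 1 \<omega> \<Longrightarrow> 0 < (if \<tau> \<omega> = \<infinity> then 0 else exp (-(\<rho> + \<mu>) * enn2real (\<tau> \<omega>)) * fhat \<rho> \<rho>h \<mu>h \<mu> * (GBM B \<theta> \<alpha> \<sigma> x (enn2real (\<tau> \<omega>)) \<omega> - K))" for \<omega>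
  proof -
    show "z < B 1 \<omega> \<Longrightarrow> 0 < (if \<tau> \<omega> = \<infinity> then 0 else exp (-(\<rho> + \<mu>) * enn2real (\<tau> \<omega>)) * fhat \<rho> \<rho>h \<mu>h \<mu> * (GBM B \<theta> \<alpha> \<sigma> x (enn2real (\<tau> \<omega>)) \<omega> - K))"
      using big[of \<omega>] fpos unfolding \<tau>_def by simp
    show "0 \<le> (if \<tau> \<omega> = \<infinity> then 0 else exp (-(\<rho> + \<mu>) * enn2real (\<tau> \<omega>)) * fhat \<rho> \<rho>h \<mu>h \<mu> * (GBM B \<theta> \<alpha> \<sigma> x (enn2real (\<tau> \<omega>)) \<omega> - K))"
      using big[of \<omega>] fpos unfolding \<tau>_def by (auto simp: less_imp_le)
  qed
  have nn: "0 \<le> ?r \<omega>" for \<omega> unfolding reward_def using L0[of \<omega>] trm[of \<omega>] by simp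
  have pos: "z < B 1 \<omega> \<Longrightarrow> 0 < ?r \<omega>" for \<omega> unfolding reward_def using L0[of \<omega>] termpos[of \<omega>] by simp
  have ge: "0 \<le> integral\<^sup>L (completion M) ?r" by (rule Bochner_Integration.integral_nonneg) (rule nn)
  have "integral\<^sup>L (completion M) ?r \<noteq> 0"
  proof
    assume "integral\<^sup>L (completion M) ?r = 0"
    then have "AE \<omega> in completion M. ?r \<omega> = 0"
      using integral_nonneg_eq_0_iff_AE[OF int] nn by simp
    then have "AE \<omega> in M. ?r \<omega> = 0" by (simp add: AE_completion_iff)
    then have "AE \<omega> in M. \<not> z < B 1 \<omega>" by eventually_elim (use pos in force)
    then have "emeasure M {\<omega> \<in> space M. z < B 1 \<omega>} = 0"
      using std_BM_meas[OF BM] by (subst (asm) AE_iff_measurable[where N="{\<omega> \<in> space M. z < B 1 \<omega>}"]) auto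
    then show False using prob_pos[OF BM, of z] by simp
  qed
  with ge show ?thesis unfolding \<tau>_def z_def by simp
qed

lemma sup_affine:
  fixes F :: "'t \<Rightarrow> real \<Rightarrow> real" and T :: "'t set"
  assumes ne: "T \<noteq> {}" and aff: "\<And>\<tau> x. \<tau> \<in> T \<Longrightarrow> 0 < x \<Longrightarrow> F \<tau> x = a \<tau> * x + b \<tau>"
    and a0: "\<And>\<tau>. \<tau> \<in> T \<Longrightarrow> 0 \<le> a \<tau>" and aA: "\<And>\<tau>. \<tau> \<in> T \<Longrightarrow> a \<tau> \<le> A"
    and bB: "\<And>\<tau>. \<tau> \<in> T \<Longrightarrow> b \<tau> \<le> Bb"
  shows "\<And>\<tau> x. \<tau> \<in> T \<Longrightarrow> 0 < x \<Longrightarrow> F \<tau> x \<le> (SUP \<tau>\<in>T. F \<tau> x)"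
    and "mono_on {0<..} (\<lambda>x. SUP \<tau>\<in>T. F \<tau> x)"
    and "convex_on {0<..} (\<lambda>x. SUP \<tau>\<in>T. F \<tau> x)"
    and "\<And>x y. 0 < x \<Longrightarrow> 0 < y \<Longrightarrow> \<bar>(SUP \<tau>\<in>T. F \<tau> x) - (SUP \<tau>\<in>T. F \<tau> y)\<bar> \<le> A * \<bar>x - y\<bar>"
proof -
  have bdd: "bdd_above ((\<lambda>\<tau>. F \<tau> x) ` T)" if "0 < x" for x
  proof (rule bdd_aboveI2)
    fix \<tau> assume "\<tau> \<in> T"
    then show "F \<tau> x \<le> A * x + Bb"
      using aff[of \<tau> x] aA[of \<tau>] bB[of \<tau>] that by (simp add: add_mono mult_right_mono)
  qed
  show up: "F \<tau> x \<le> (SUP \<tau>\<in>T. F \<tau> x)" if "\<tau> \<in> T" "0 < x" for \<tau> x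
    by (rule cSUP_upper[OF that(1) bdd[OF that(2)]])
  show "mono_on {0<..} (\<lambda>x. SUP \<tau>\<in>T. F \<tau> x)"
  proof (rule mono_onI)
    fix x y :: real assume "x \<in> {0<..}" "y \<in> {0<..}" "x \<le> y"
    then have x: "0 < x" and y: "0 < y" and xy: "x \<le> y" by auto
    show "(SUP \<tau>\<in>T. F \<tau> x) \<le> (SUP \<tau>\<in>T. F \<tau> y)"
    proof (rule cSUP_mono[OF ne bdd[OF y]])
      fix \<tau> assume t: "\<tau> \<in> T"
      have "F \<tau> x \<le> F \<tau> y" using aff[OF t x] aff[OF t y] a0[OF t] xy by (simp add: mult_left_mono)
      then show "\<exists>m\<in>T. F \<tau> x \<le> F m y" using t by blast
    qed
  qed
  show "convex_on {0<..} (\<lambda>x. SUP \<tau>\<in>T. F \<tau> x)"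
    unfolding convex_on_def
  proof (intro conjI ballI allI impI)
    show "convex {0::real<..}" by (rule convex_real_interval)
    fix x y :: real and u v :: real
    assume x: "x \<in> {0<..}" and y: "y \<in> {0<..}" and u: "0 \<le> u" and v: "0 \<le> v" and uv: "u + v = 1"
    have x0: "0 < x" and y0: "0 < y" using x y by auto
    have z0: "0 < u *\<^sub>R x + v *\<^sub>R y"
    proof (cases "u = 0")
      case True then show ?thesis using uv y0 by simp
    next
      case False then have "0 < u" using u by simp
      then show ?thesis using x0 y0 v by (simp add: add_pos_nonneg)
    qed
    show "(SUP \<tau>\<in>T. F \<tau> (u *\<^sub>R x + v *\<^sub>R y)) \<le> u * (SUP \<tau>\<in>T. F \<tau> x) + v * (SUP \<tau>\<in>T. F \<tau> y)"
    proof (rule cSUP_least[OF ne])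
      fix \<tau> assume t: "\<tau> \<in> T"
      have "F \<tau> (u *\<^sub>R x + v *\<^sub>R y) = a \<tau> * (u * x + v * y) + (u + v) * b \<tau>"
        using aff[OF t z0] uv by simp
      also have "\<dots> = u * (a \<tau> * x + b \<tau>) + v * (a \<tau> * y + b \<tau>)" by (simp add: algebra_simps)
      also have "\<dots> = u * F \<tau> x + v * F \<tau> y" using aff[OF t x0] aff[OF t y0] by simp
      also have "\<dots> \<le> u * (SUP \<tau>\<in>T. F \<tau> x) + v * (SUP \<tau>\<in>T. F \<tau> y)"
        using up[OF t x0] up[OF t y0] u v by (intro add_mono mult_left_mono) auto
      finally show "F \<tau> (u *\<^sub>R x + v *\<^sub>R y) \<le> u * (SUP \<tau>\<in>T. F \<tau> x) + v * (SUP \<tau>\<in>T. F \<tau> y)" .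
    qed
  qed
  have one: "(SUP \<tau>\<in>T. F \<tau> x) \<le> (SUP \<tau>\<in>T. F \<tau> y) + A * \<bar>x - y\<bar>" if x: "0 < x" and y: "0 < y" for x y
  proof -
    have "(SUP \<tau>\<in>T. F \<tau> x) - A * \<bar>x - y\<bar> \<le> (SUP \<tau>\<in>T. F \<tau> y)"
    proof -
      have "(SUP \<tau>\<in>T. F \<tau> x) \<le> (SUP \<tau>\<in>T. F \<tau> y) + A * \<bar>x - y\<bar>"
      proof (rule cSUP_least[OF ne])
        fix \<tau> assume t: "\<tau> \<in> T"
        have "a \<tau> * x \<le> a \<tau> * y + a \<tau> * \<bar>x - y\<bar>"
          using a0[OF t] by (simp add: distrib_left[symmetric] mult_left_mono)
        also have "a \<tau> * \<bar>x - y\<bar> \<le> A * \<bar>x - y\<bar>" using aA[OF t] by (simp add: mult_right_mono)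
        finally have "F \<tau> x \<le> F \<tau> y + A * \<bar>x - y\<bar>" using aff[OF t x] aff[OF t y] by simp
        also have "\<dots> \<le> (SUP \<tau>\<in>T. F \<tau> y) + A * \<bar>x - y\<bar>" using up[OF t y] by simp
        finally show "F \<tau> x \<le> (SUP \<tau>\<in>T. F \<tau> y) + A * \<bar>x - y\<bar>" .
      qed
      then show ?thesis by simp
    qed
    then show ?thesis by simp
  qed
  show "\<bar>(SUP \<tau>\<in>T. F \<tau> x) - (SUP \<tau>\<in>T. F \<tau> y)\<bar> \<le> A * \<bar>x - y\<bar>" if "0 < x" "0 < y" for x y
    using one[OF that] one[OF that(2,1)] by (simp add: abs_minus_commute abs_le_iff)
qed



theorem proposition4p3:
  fixes M :: "'a measure" and B :: "real \<Rightarrow> 'a \<Rightarrow> real"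
    and \<theta> \<alpha> \<sigma> \<rho> \<nu> K \<rho>h \<mu>m \<mu>M \<mu>h :: real
  assumes "std_BM M B"
    and "\<theta> > 0" and "\<alpha> \<ge> 0" and "\<sigma> > 0" and "\<rho> > 0" and "0 \<le> \<nu>" and "\<nu> \<le> 1"
    and "\<rho>h > 0" and "0 < \<mu>m" and "\<mu>m \<le> \<mu>M" and "\<mu>m \<le> \<mu>h" and "\<mu>h \<le> \<mu>M"
    and "\<theta> - \<alpha> - \<rho> - \<mu>m < 0"
  shows "(\<forall>\<mu>\<in>{\<mu>m..\<mu>M}.
            (\<forall>x>0. VN M B \<theta> \<alpha> \<sigma> \<rho> \<nu> K \<rho>h \<mu>h x \<mu> > 0)
          \<and> mono_on {0<..} (\<lambda>x. VN M B \<theta> \<alpha> \<sigma> \<rho> \<nu> K \<rho>h \<mu>h x \<mu>)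
          \<and> convex_on {0<..} (\<lambda>x. VN M B \<theta> \<alpha> \<sigma> \<rho> \<nu> K \<rho>h \<mu>h x \<mu>))
       \<and> (\<exists>L>0. \<forall>\<mu>\<in>{\<mu>m..\<mu>M}. \<forall>x>0. \<forall>y>0.
            \<bar>VN M B \<theta> \<alpha> \<sigma> \<rho> \<nu> K \<rho>h \<mu>h x \<mu> - VN M B \<theta> \<alpha> \<sigma> \<rho> \<nu> K \<rho>h \<mu>h y \<mu>\<bar> \<le> L * \<bar>x - y\<bar>)"
proof -
  note BM = assms(1)
  have \<sigma>: "0 < \<sigma>" using assms by simp
  define \<kappa> where "\<kappa> = \<rho> + \<mu>m - \<theta> + \<alpha>"
  have \<kappa>: "0 < \<kappa>" unfolding \<kappa>_def using assms by simp
  define Gi where "Gi = enn2real (\<integral>\<^sup>+ \<omega>. Gtot B \<sigma> \<kappa> \<omega> \<partial>M)"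
  have Gi0: "0 \<le> Gi" unfolding Gi_def by simp
  define f0 where "f0 = (\<rho>h + \<mu>h) / (\<rho> + \<mu>m)"
  define A where "A = (\<alpha> + \<mu>M + f0) * Gi"
  have A0: "0 \<le> A" unfolding A_def f0_def using assms Gi0 by simp
  define T where "T = {\<tau>. BM_stopping_time M B \<tau>}"
  have VNe: "(\<lambda>x. VN M B \<theta> \<alpha> \<sigma> \<rho> \<nu> K \<rho>h \<mu>h x \<mu>)
      = (\<lambda>x. SUP \<tau>\<in>T. integral\<^sup>L (completion M) (reward B \<theta> \<alpha> \<sigma> \<rho> \<nu> K \<rho>h \<mu>h x \<mu> \<tau>))" for \<mu>
    unfolding VN_def T_def ..
  have key: "(\<forall>x>0. VN M B \<theta> \<alpha> \<sigma> \<rho> \<nu> K \<rho>h \<mu>h x \<mu> > 0)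
          \<and> mono_on {0<..} (\<lambda>x. VN M B \<theta> \<alpha> \<sigma> \<rho> \<nu> K \<rho>h \<mu>h x \<mu>)
          \<and> convex_on {0<..} (\<lambda>x. VN M B \<theta> \<alpha> \<sigma> \<rho> \<nu> K \<rho>h \<mu>h x \<mu>)
          \<and> (\<forall>x>0. \<forall>y>0. \<bar>VN M B \<theta> \<alpha> \<sigma> \<rho> \<nu> K \<rho>h \<mu>h x \<mu> - VN M B \<theta> \<alpha> \<sigma> \<rho> \<nu> K \<rho>h \<mu>h y \<mu>\<bar> \<le> A * \<bar>x - y\<bar>)"
    if \<mu>: "\<mu> \<in> {\<mu>m..\<mu>M}" for \<mu>
  proof -
    have \<mu>1: "\<mu>m \<le> \<mu>" "\<mu> \<le> \<mu>M" using \<mu> by auto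
    have c: "\<kappa> + \<theta> - \<alpha> \<le> \<rho> + \<mu>" unfolding \<kappa>_def using \<mu>1 by simp
    have c0: "0 < \<rho> + \<mu>" using assms \<mu>1 by simp
    have \<nu>\<mu>: "\<nu> * \<mu> \<le> \<mu>" using assms \<mu>1 by (simp add: mult_left_le_one_le)
    have a0: "0 \<le> \<alpha> + \<nu> * \<mu>" using assms \<mu>1 by simp
    have ale: "\<alpha> + \<nu> * \<mu> \<le> \<alpha> + \<mu>M" using \<nu>\<mu> \<mu>1 by simp
    have fpos: "0 < fhat \<rho> \<rho>h \<mu>h \<mu>" unfolding fhat_def using assms c0 by simp
    have f0': "0 \<le> fhat \<rho> \<rho>h \<mu>h \<mu>" using fpos by simp
    have fle: "fhat \<rho> \<rho>h \<mu>h \<mu> \<le> f0" unfolding fhat_def f0_def using assms \<mu>1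
      by (intro divide_left_mono) auto
    define a where "a = (\<lambda>\<tau>. integral\<^sup>L (completion M) (R1 B \<theta> \<alpha> \<sigma> \<rho> \<nu> \<rho>h \<mu>h \<mu> \<tau>))"
    define b where "b = (\<lambda>\<tau>. integral\<^sup>L (completion M) (R0 \<rho> K \<rho>h \<mu>h \<mu> \<tau>))"
    define F where "F = (\<lambda>\<tau> x. integral\<^sup>L (completion M) (reward B \<theta> \<alpha> \<sigma> \<rho> \<nu> K \<rho>h \<mu>h x \<mu> \<tau>))"
    have \<tau>m: "\<tau> \<in> borel_measurable (completion M)" if "\<tau> \<in> T" for \<tau>
      using that unfolding T_def by (auto intro: stopping_meas[OF BM])
    have ne: "T \<noteq> {}" using tau_pos_st[OF BM, of 0] unfolding T_def by auto
    have aff: "\<And>\<tau> x. \<tau> \<in> T \<Longrightarrow> 0 < x \<Longrightarrow> F \<tau> x = a \<tau> * x + b \<tau>"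
    proof -
      fix \<tau> and x :: real assume that: "\<tau> \<in> T" "0 < x"
      show "F \<tau> x = a \<tau> * x + b \<tau>"
        unfolding F_def a_def b_def reward_integral(2)[OF BM \<sigma> \<kappa> \<tau>m[OF that(1)] c c0 a0 f0'] by simp
    qed
    have aa0: "\<And>\<tau>. \<tau> \<in> T \<Longrightarrow> 0 \<le> a \<tau>"
      unfolding a_def by (intro Bochner_Integration.integral_nonneg R1_nonneg[OF a0 f0'])
    have aA: "\<And>\<tau>. \<tau> \<in> T \<Longrightarrow> a \<tau> \<le> A"
    proof -
      fix \<tau> assume that: "\<tau> \<in> T"
      have "a \<tau> \<le> ((\<alpha> + \<nu> * \<mu>) + fhat \<rho> \<rho>h \<mu>h \<mu>) * Gi"
        unfolding a_def Gi_def by (rule R1_int(2)[OF BM \<sigma> \<kappa> \<tau>m[OF that] c a0 f0'])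
      also have "\<dots> \<le> A" unfolding A_def using ale fle Gi0 by (intro mult_right_mono) auto
      finally show "a \<tau> \<le> A" .
    qed
    have bB: "\<And>\<tau>. \<tau> \<in> T \<Longrightarrow> b \<tau> \<le> f0 * \<bar>K\<bar>"
    proof -
      fix \<tau> assume that: "\<tau> \<in> T"
      have "b \<tau> \<le> fhat \<rho> \<rho>h \<mu>h \<mu> * \<bar>K\<bar>"
        unfolding b_def by (rule R0_int(2)[OF BM \<tau>m[OF that] c0 f0'])
      also have "\<dots> \<le> f0 * \<bar>K\<bar>" using fle by (intro mult_right_mono) auto
      finally show "b \<tau> \<le> f0 * \<bar>K\<bar>" .
    qed
    note S0 = sup_affine[where F=F and T=T and a=a and b=b and A=A and Bb="f0 * \<bar>K\<bar>", OF ne aff aa0 aA bB]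
    have S1: "\<And>\<tau> x. \<tau> \<in> T \<Longrightarrow> 0 < x \<Longrightarrow> F \<tau> x \<le> (SUP \<tau>\<in>T. F \<tau> x)"
      using S0(1) by blast
    have S2: "mono_on {0<..} (\<lambda>x. SUP \<tau>\<in>T. F \<tau> x)" using S0(2) by blast
    have S3: "convex_on {0<..} (\<lambda>x. SUP \<tau>\<in>T. F \<tau> x)" using S0(3) by blast
    have S4: "\<And>x y. 0 < x \<Longrightarrow> 0 < y \<Longrightarrow> \<bar>(SUP \<tau>\<in>T. F \<tau> x) - (SUP \<tau>\<in>T. F \<tau> y)\<bar> \<le> A * \<bar>x - y\<bar>"
      using S0(4) by blast
    have V: "(\<lambda>x. VN M B \<theta> \<alpha> \<sigma> \<rho> \<nu> K \<rho>h \<mu>h x \<mu>) = (\<lambda>x. SUP \<tau>\<in>T. F \<tau> x)"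
      unfolding VNe F_def ..
    have V': "VN M B \<theta> \<alpha> \<sigma> \<rho> \<nu> K \<rho>h \<mu>h x \<mu> = (SUP \<tau>\<in>T. F \<tau> x)" for x
      using fun_cong[OF V, of x] by simp
    have pos: "VN M B \<theta> \<alpha> \<sigma> \<rho> \<nu> K \<rho>h \<mu>h x \<mu> > 0" if x: "0 < x" for x
    proof -
      define z where "z = (ln ((\<bar>K\<bar> + 1) / x) - (\<theta> - \<alpha> - \<sigma>\<^sup>2 / 2)) / \<sigma>"
      define \<tau>p :: "'a \<Rightarrow> ennreal" where "\<tau>p = (\<lambda>\<omega>. if z < B 1 \<omega> then 1 else \<top>)"
      have tp: "\<tau>p \<in> T" unfolding T_def \<tau>p_def using tau_pos_st[OF BM] by simp
      have "0 < F \<tau>p x" unfolding F_def \<tau>p_def z_def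
        by (rule reward_pos[OF BM \<sigma> \<kappa> c c0 a0 fpos x])
      also have "\<dots> \<le> (SUP \<tau>\<in>T. F \<tau> x)" by (rule S1[OF tp x])
      finally show ?thesis unfolding V' .
    qed
    show ?thesis using pos S2 S3 S4 unfolding V V' by blast
  qed
  show ?thesis
  proof (intro conjI)
    show "\<forall>\<mu>\<in>{\<mu>m..\<mu>M}. (\<forall>x>0. VN M B \<theta> \<alpha> \<sigma> \<rho> \<nu> K \<rho>h \<mu>h x \<mu> > 0)
          \<and> mono_on {0<..} (\<lambda>x. VN M B \<theta> \<alpha> \<sigma> \<rho> \<nu> K \<rho>h \<mu>h x \<mu>)
          \<and> convex_on {0<..} (\<lambda>x. VN M B \<theta> \<alpha> \<sigma> \<rho> \<nu> K \<rho>h \<mu>h x \<mu>)"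
      using key by blast
    show "\<exists>L>0. \<forall>\<mu>\<in>{\<mu>m..\<mu>M}. \<forall>x>0. \<forall>y>0.
            \<bar>VN M B \<theta> \<alpha> \<sigma> \<rho> \<nu> K \<rho>h \<mu>h x \<mu> - VN M B \<theta> \<alpha> \<sigma> \<rho> \<nu> K \<rho>h \<mu>h y \<mu>\<bar> \<le> L * \<bar>x - y\<bar>"
    proof (intro exI[of _ "A + 1"] conjI ballI allI impI)
      show "0 < A + 1" using A0 by simp
      fix \<mu> x y :: real assume \<mu>: "\<mu> \<in> {\<mu>m..\<mu>M}" and x: "0 < x" and y: "0 < y"
      have "\<bar>VN M B \<theta> \<alpha> \<sigma> \<rho> \<nu> K \<rho>h \<mu>h x \<mu> - VN M B \<theta> \<alpha> \<sigma> \<rho> \<nu> K \<rho>h \<mu>h y \<mu>\<bar> \<le> A * \<bar>x - y\<bar>"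
        using key[OF \<mu>] x y by blast
      also have "\<dots> \<le> (A + 1) * \<bar>x - y\<bar>" by (simp add: mult_right_mono)
      finally show "\<bar>VN M B \<theta> \<alpha> \<sigma> \<rho> \<nu> K \<rho>h \<mu>h x \<mu> - VN M B \<theta> \<alpha> \<sigma> \<rho> \<nu> K \<rho>h \<mu>h y \<mu>\<bar> \<le> (A + 1) * \<bar>x - y\<bar>" .
    qed
  qed
qed

end
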